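(* Let $\mathbf{Z}=\alpha\mathbf{N}+\beta\mathbf{U}$ (a sequence in $n$), where $\alpha,\beta\in\mathbb{R}$, $\mathbf{N}=\mathbf{N}^{(n)}$ is semi norm-ergodic noise with effective variance $\sigma^2_{\mathbf{N}}=\frac{1}{n}\mathbb{E}\|\mathbf{N}\|^2$, and $\mathbf{U}=\mathbf{U}^{(n)}$ is a dither statistically independent of $\mathbf{N}$, uniformly distributed over the Voronoi region $\mathcal{V}$ of a lattice $\Lambda=\Lambda^{(n)}$, where the sequence $\Lambda^{(n)}$ is good for MSE quantization; let $\sigma^2_{\mathbf{U}}=\frac1n\mathbb{E}\|\mathbf{U}\|^2$. Then the sequence of random vectors $\mathbf{Z}$ is semi norm-ergodic.
   Context: For a lattice $\Lambda\subset\mathbb{R}^n$: the Voronoi region $\mathcal{V}$ is the set of points whose nearest lattice point (ties broken systematically) is $\mathbf{0}$; $V(\Lambda)$ its volume; $\sigma^2(\Lambda)=\frac1n\mathbb{E}\|\mathbf{U}\|^2$ for $\mathbf{U}$ uniform on $\mathcal{V}$; $G(\Lambda)=\sigma^2(\Lambda)/V(\Lambda)^{2/n}$. A sequence $\Lambda^{(n)}$ is good for MSE quantization if $\lim_{n\to\infty}G(\Lambda^{(n)})=\frac{1}{2\pi e}$. A sequence of random vectors $\mathbf{Z}^{(n)}\in\mathbb{R}^n$ with effective variance $\sigma^2_{\mathbf{Z}}=\frac1n\mathbb{E}\|\mathbf{Z}^{(n)}\|^2<\infty$ is semi norm-ergodic if for every $\epsilon>0,\delta>0$ and all $n$ large enough,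 $\Pr\big(\|\mathbf{Z}^{(n)}\|>\sqrt{(1+\delta)n\sigma^2_{\mathbf{Z}}}\big)\le\epsilon$. *)

theory Defs
  imports "HOL-Probability.Probability"
begin

text \<open>Vectors of R^n are represented as functions nat => real; only the components
  i < n are relevant. The measurable space / Lebesgue measure on R^n is the
  product measure of lborel over {..<n}.\<close>

definition Rn :: "nat \<Rightarrow> (nat \<Rightarrow> real) measure" where
  "Rn n = PiM {..<n} (\<lambda>_. lborel)"

definition vnorm :: "nat \<Rightarrow> (nat \<Rightarrow> real) \<Rightarrow> real" where
  "vnorm n x = sqrt (\<Sum>i<n. (x i)\<^sup>2)"

text \<open>B j is the j-th generator vector (j < n); they must be linearly independent in R^n.\<close>
definition lattice_basis :: "nat \<Rightarrow> (nat \<Rightarrow> nat \<Rightarrow> real) \<Rightarrow> bool" where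
  "lattice_basis n B \<longleftrightarrow>
     (\<forall>c :: nat \<Rightarrow> real. (\<forall>i<n. (\<Sum>j<n. c j * B j i) = 0) \<longrightarrow> (\<forall>j<n. c j = 0))"

definition lattice :: "nat \<Rightarrow> (nat \<Rightarrow> nat \<Rightarrow> real) \<Rightarrow> (nat \<Rightarrow> real) set" where
  "lattice n B = {restrict (\<lambda>i. \<Sum>j<n. real_of_int (k j) * B j i) {..<n} | k :: nat \<Rightarrow> int. True}"

text \<open>Voronoi region of the lattice point 0 (closed cell; ties form a null set).\<close>
definition voronoi :: "nat \<Rightarrow> (nat \<Rightarrow> real) set \<Rightarrow> (nat \<Rightarrow> real) set" where
  "voronoi n L = {x \<in> space (Rn n). \<forall>l\<in>L. vnorm n x \<le> vnorm n (\<lambda>i. x i - l i)}"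

definition cell_volume :: "nat \<Rightarrow> (nat \<Rightarrow> real) set \<Rightarrow> real" where
  "cell_volume n L = measure (Rn n) (voronoi n L)"

definition second_moment :: "nat \<Rightarrow> (nat \<Rightarrow> real) set \<Rightarrow> real" where
  "second_moment n L =
     (1 / real n) * (integral\<^sup>L (uniform_measure (Rn n) (voronoi n L)) (\<lambda>x. (vnorm n x)\<^sup>2))"

definition NSM :: "nat \<Rightarrow> (nat \<Rightarrow> real) set \<Rightarrow> real" where
  "NSM n L = second_moment n L / (cell_volume n L) powr (2 / real n)"

definition good_for_MSE :: "(nat \<Rightarrow> nat \<Rightarrow> nat \<Rightarrow> real) \<Rightarrow> bool" where
  "good_for_MSE B \<longleftrightarrow> (\<forall>n. lattice_basis n (B n)) \<and>
     (\<lambda>n. NSM n (lattice n (B n))) \<longlonglongrightarrow> 1 / (2 * pi * exp 1)"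

definition eff_var :: "'a measure \<Rightarrow> nat \<Rightarrow> ('a \<Rightarrow> nat \<Rightarrow> real) \<Rightarrow> real" where
  "eff_var M n Z = (1 / real n) * (integral\<^sup>L M (\<lambda>\<omega>. (vnorm n (Z \<omega>))\<^sup>2))"

definition semi_norm_ergodic :: "(nat \<Rightarrow> 'a measure) \<Rightarrow> (nat \<Rightarrow> 'a \<Rightarrow> nat \<Rightarrow> real) \<Rightarrow> bool" where
  "semi_norm_ergodic M Z \<longleftrightarrow>
     (\<forall>n. Z n \<in> M n \<rightarrow>\<^sub>M Rn n \<and> integrable (M n) (\<lambda>\<omega>. (vnorm n (Z n \<omega>))\<^sup>2)) \<and>
     (\<forall>\<epsilon>>0. \<forall>\<delta>>0. eventually (\<lambda>n.
        measure (M n) {\<omega> \<in> space (M n).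
          vnorm n (Z n \<omega>) > sqrt ((1 + \<delta>) * real n * eff_var (M n) n (Z n))} \<le> \<epsilon>) sequentially)"

end

theory Submission
  imports Defs "Jordan_Normal_Form.Determinant"
begin

hide_const (open) Lattice.lattice


lemma vor_halfspace:
  assumes x: "x \<in> voronoi n (lattice n B)" and j: "j < n"
  shows "\<bar>\<Sum>i<n. x i * B j i\<bar> \<le> (\<Sum>i<n. (B j i)\<^sup>2) / 2"
proof -
  have key: "2 * (c * (\<Sum>i<n. x i * B j i)) \<le> (\<Sum>i<n. (B j i)\<^sup>2)" if c: "c = 1 \<or> c = -1" for c :: real
  proof -
    define k :: "nat \<Rightarrow> int" where "k = (\<lambda>j'. if j' = j then (if c = 1 then 1 else -1) else 0)"
    define l where "l = restrict (\<lambda>i. \<Sum>j'<n. real_of_int (k j') * B j' i) {..<n}"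
    have lL: "l \<in> lattice n B" unfolding Defs.lattice_def l_def by blast
    have li: "l i = c * B j i" if "i < n" for i
    proof -
      have "(\<Sum>j'<n. real_of_int (k j') * B j' i) = real_of_int (k j) * B j i"
      proof -
        have "(\<Sum>j'<n. real_of_int (k j') * B j' i) = (\<Sum>j'<n. if j' = j then real_of_int (k j) * B j i else 0)"
          by (rule sum.cong) (auto simp: k_def)
        also have "\<dots> = real_of_int (k j) * B j i" using j by simp
        finally show ?thesis .
      qed
      then show ?thesis using that c by (auto simp: l_def k_def)
    qed
    from x lL have "vnorm n x \<le> vnorm n (\<lambda>i. x i - l i)" unfolding voronoi_def by auto
    hence "(\<Sum>i<n. (x i)\<^sup>2) \<le> (\<Sum>i<n. (x i - l i)\<^sup>2)"
      unfolding vnorm_def by (simp add: sum_nonneg)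
    also have "\<dots> = (\<Sum>i<n. (x i)\<^sup>2 - 2 * (c * (x i * B j i)) + c\<^sup>2 * (B j i)\<^sup>2)"
      by (rule sum.cong) (auto simp: li power2_eq_square algebra_simps)
    also have "\<dots> = (\<Sum>i<n. (x i)\<^sup>2) - 2 * (c * (\<Sum>i<n. x i * B j i)) + (\<Sum>i<n. (B j i)\<^sup>2)"
      using c by (auto simp: sum.distrib sum_subtractf sum_distrib_left)
    finally show ?thesis by simp
  qed
  from key[of 1] key[of "-1"] show ?thesis by auto
qed

lemma lattice_basis_left_inverse:
  assumes "lattice_basis n B"
  shows "\<exists>C. \<forall>x::nat\<Rightarrow>real. \<forall>i<n. x i = (\<Sum>j<n. C i j * (\<Sum>k<n. B j k * x k))"
proof -
  define A :: "real mat" where "A = mat n n (\<lambda>(j,i). B j i)"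
  have A: "A \<in> carrier_mat n n" "transpose_mat A \<in> carrier_mat n n" unfolding A_def by auto
  have "det (transpose_mat A) \<noteq> 0"
  proof
    assume "det (transpose_mat A) = 0"
    then obtain v where v: "v \<in> carrier_vec n" "v \<noteq> 0\<^sub>v n" "transpose_mat A *\<^sub>v v = 0\<^sub>v n"
      using det_0_iff_vec_prod_zero_field[OF A(2)] by auto
    have "\<forall>i<n. (\<Sum>j<n. v $ j * B j i) = 0"
    proof (intro allI impI)
      fix i assume i: "i < n"
      have "(transpose_mat A *\<^sub>v v) $ i = 0" using v(3) i by simp
      moreover have "(transpose_mat A *\<^sub>v v) $ i = (\<Sum>j<n. v $ j * B j i)"
        using i v(1) by (simp add: A_def scalar_prod_def lessThan_atLeast0 mult.commute)
      ultimately show "(\<Sum>j<n. v $ j * B j i) = 0" by simp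
    qed
    with assms have "\<forall>j<n. v $ j = 0" unfolding lattice_basis_def by blast
    then have "v = 0\<^sub>v n" using v(1) by (intro eq_vecI) auto
    with v(2) show False by simp
  qed
  hence "det A \<noteq> 0" using det_transpose[OF A(1)] by simp
  from det_non_zero_imp_unit[OF A(1) this, of "()"]
  obtain C where C: "C \<in> carrier_mat n n" "C * A = 1\<^sub>m n"
    unfolding Units_def ring_mat_def by auto
  show ?thesis
  proof (intro exI allI impI)
    fix x :: "nat \<Rightarrow> real" and i assume i: "i < n"
    define xv where "xv = vec n x"
    have xv: "xv \<in> carrier_vec n" unfolding xv_def by simp
    have "C *\<^sub>v (A *\<^sub>v xv) = (C * A) *\<^sub>v xv"
      using assoc_mult_mat_vec[OF C(1) A(1) xv] by simp
    also have "\<dots> = xv" using C xv by simp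
    finally have "(C *\<^sub>v (A *\<^sub>v xv)) $ i = x i" using i by (simp add: xv_def)
    moreover have "(C *\<^sub>v (A *\<^sub>v xv)) $ i = (\<Sum>j<n. C $$ (i,j) * (\<Sum>k<n. B j k * x k))"
      using i C A xv by (simp add: A_def xv_def scalar_prod_def lessThan_atLeast0)
    ultimately show "x i = (\<Sum>j<n. C $$ (i,j) * (\<Sum>k<n. B j k * x k))" by simp
  qed
qed




lemma gauss1:
  fixes t c :: real assumes t: "t > 0"
  shows "(\<integral>\<^sup>+y. ennreal (exp (- t * y\<^sup>2 + c * y)) \<partial>lborel) = ennreal (sqrt (pi / t) * exp (c\<^sup>2 / (4 * t)))"
proof -
  define \<sigma> where "\<sigma> = sqrt (1 / (2 * t))"
  define \<mu> where "\<mu> = c / (2 * t)"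
  have s2: "\<sigma>\<^sup>2 = 1 / (2 * t)" using t by (simp add: \<sigma>_def)
  have eq: "exp (- t * y\<^sup>2 + c * y) = (sqrt (pi / t) * exp (c\<^sup>2 / (4 * t))) * normal_density \<mu> \<sigma> y" for y
  proof -
    have "2 * pi * \<sigma>\<^sup>2 = pi / t" using s2 by simp
    moreover have "-(y - \<mu>)\<^sup>2 / (2 * \<sigma>\<^sup>2) = - t * y\<^sup>2 + c * y - c\<^sup>2 / (4 * t)"
    proof -
      have "-(y - \<mu>)\<^sup>2 / (2 * \<sigma>\<^sup>2) = -(y - \<mu>)\<^sup>2 * t" using s2 by simp
      also have "\<dots> = - t * y\<^sup>2 + c * y - c\<^sup>2 / (4 * t)"
        using t by (simp add: \<mu>_def field_simps power2_eq_square)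
      finally show ?thesis .
    qed
    moreover have "sqrt (pi / t) * (1 / sqrt (pi / t)) = 1" using t by (simp add: pi_gt_zero)
    ultimately have nd: "normal_density \<mu> \<sigma> y = (1 / sqrt (pi / t)) * exp (- t * y\<^sup>2 + c * y - c\<^sup>2 / (4 * t))"
      unfolding normal_density_def by metis
    have "(sqrt (pi / t) * exp (c\<^sup>2 / (4 * t))) * normal_density \<mu> \<sigma> y
       = (sqrt (pi / t) * (1 / sqrt (pi / t))) * (exp (c\<^sup>2 / (4 * t)) * exp (- t * y\<^sup>2 + c * y - c\<^sup>2 / (4 * t)))"
      unfolding nd by (simp only: mult_ac)
    also have "\<dots> = exp (c\<^sup>2 / (4 * t) + (- t * y\<^sup>2 + c * y - c\<^sup>2 / (4 * t)))"
      using t by (simp add: mult_exp_exp)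
    also have "\<dots> = exp (- t * y\<^sup>2 + c * y)" by simp
    finally show ?thesis by simp
  qed
  have "(\<integral>\<^sup>+y. ennreal (exp (- t * y\<^sup>2 + c * y)) \<partial>lborel)
      = (\<integral>\<^sup>+y. ennreal (sqrt (pi / t) * exp (c\<^sup>2 / (4 * t))) * ennreal (normal_density \<mu> \<sigma> y) \<partial>lborel)"
  proof (rule nn_integral_cong)
    fix y
    have "exp (- t * y\<^sup>2 + c * y) = (sqrt (pi / t) * exp (c\<^sup>2 / (4 * t))) * normal_density \<mu> \<sigma> y" by (rule eq)
    then show "ennreal (exp (- t * y\<^sup>2 + c * y)) = ennreal (sqrt (pi / t) * exp (c\<^sup>2 / (4 * t))) * ennreal (normal_density \<mu> \<sigma> y)"
      by (simp, subst ennreal_mult) (use t in auto)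
  qed
  also have "\<dots> = ennreal (sqrt (pi / t) * exp (c\<^sup>2 / (4 * t))) * (\<integral>\<^sup>+y. ennreal (normal_density \<mu> \<sigma> y) \<partial>lborel)"
    by (rule nn_integral_cmult) simp
  also have "(\<integral>\<^sup>+y. ennreal (normal_density \<mu> \<sigma> y) \<partial>lborel) = 1"
  proof -
    have sp: "\<sigma> > 0" using t by (simp add: \<sigma>_def)
    show ?thesis
      by (subst nn_integral_eq_integral) (use sp integrable_normal_density[OF sp] integral_normal_density[OF sp] in auto)
  qed
  finally show ?thesis by simp
qed

lemma psf_lborel: "product_sigma_finite (\<lambda>_::nat. lborel :: real measure)"
  unfolding product_sigma_finite_def by (simp add: lborel.sigma_finite_measure_axioms)

lemma meas_comp: "i < n \<Longrightarrow> (\<lambda>x. x i) \<in> borel_measurable (Rn n)"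
  unfolding Rn_def by simp

lemma gauss_bound:
  fixes t s A b :: real and w :: "nat \<Rightarrow> real"
  assumes t: "t > 0" and s: "s \<ge> 0"
  shows "emeasure (Rn n) {x\<in>space (Rn n). (\<Sum>i<n. (x i)\<^sup>2) \<le> A \<and> b \<le> (\<Sum>i<n. x i * w i)}
    \<le> ennreal (exp (t * A - s * b + s\<^sup>2 * (\<Sum>i<n. (w i)\<^sup>2) / (4 * t)) * sqrt (pi / t) ^ n)"
proof -
  interpret product_sigma_finite "\<lambda>_::nat. lborel :: real measure" by (rule psf_lborel)
  define S where "S = {x\<in>space (Rn n). (\<Sum>i<n. (x i)\<^sup>2) \<le> A \<and> b \<le> (\<Sum>i<n. x i * w i)}"
  have S: "S \<in> sets (Rn n)" unfolding S_def Rn_def by measurable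
  define g where "g = (\<lambda>i y. ennreal (exp (- t * y\<^sup>2 + (s * w i) * y)))"
  have "emeasure (Rn n) S = (\<integral>\<^sup>+x. indicator S x \<partial>Rn n)"
    using S by simp
  also have "\<dots> \<le> (\<integral>\<^sup>+x. ennreal (exp (t * A - s * b)) * (\<Prod>i\<in>{..<n}. g i (x i)) \<partial>Rn n)"
  proof (rule nn_integral_mono)
    fix x assume x: "x \<in> space (Rn n)"
    have pr: "(\<Prod>i\<in>{..<n}. g i (x i)) = ennreal (exp (\<Sum>i<n. - t * (x i)\<^sup>2 + (s * w i) * x i))"
      unfolding g_def by (simp add: exp_sum prod_ennreal)
    show "indicator S x \<le> ennreal (exp (t * A - s * b)) * (\<Prod>i\<in>{..<n}. g i (x i))"
    proof (cases "x \<in> S")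
      case True
      then have h: "(\<Sum>i<n. (x i)\<^sup>2) \<le> A" "b \<le> (\<Sum>i<n. x i * w i)" unfolding S_def by auto
      have e: "(\<Sum>i<n. - t * (x i)\<^sup>2 + (s * w i) * x i) = - t * (\<Sum>i<n. (x i)\<^sup>2) + s * (\<Sum>i<n. x i * w i)"
        by (simp add: sum.distrib sum_distrib_left mult_ac sum_subtractf sum_negf)
      have "t * (A - (\<Sum>i<n. (x i)\<^sup>2)) \<ge> 0" using t h by simp
      moreover have "s * ((\<Sum>i<n. x i * w i) - b) \<ge> 0" using s h by simp
      ultimately have "0 \<le> t * A - s * b + (\<Sum>i<n. - t * (x i)\<^sup>2 + (s * w i) * x i)"
        unfolding e by (simp add: algebra_simps)
      then have "1 \<le> exp (t * A - s * b) * exp (\<Sum>i<n. - t * (x i)\<^sup>2 + (s * w i) * x i)"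
        by (simp add: mult_exp_exp)
      then have "1 \<le> ennreal (exp (t * A - s * b) * exp (\<Sum>i<n. - t * (x i)\<^sup>2 + (s * w i) * x i))"
        by (simp add: ennreal_1[symmetric] del: ennreal_1)
      then show ?thesis using True by (simp add: pr ennreal_mult)
    qed (simp)
  qed
  also have "\<dots> = ennreal (exp (t * A - s * b)) * (\<integral>\<^sup>+x. (\<Prod>i\<in>{..<n}. g i (x i)) \<partial>Rn n)"
    by (rule nn_integral_cmult) (unfold g_def Rn_def, measurable)
  also have "(\<integral>\<^sup>+x. (\<Prod>i\<in>{..<n}. g i (x i)) \<partial>Rn n) = (\<Prod>i\<in>{..<n}. integral\<^sup>N lborel (g i))"
    unfolding Rn_def by (rule product_nn_integral_prod) (auto simp: g_def)
  also have "\<dots> = (\<Prod>i\<in>{..<n}. ennreal (sqrt (pi / t) * exp ((s * w i)\<^sup>2 / (4 * t))))"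
    unfolding g_def using gauss1[OF t] by simp
  also have "\<dots> = ennreal (\<Prod>i\<in>{..<n}. sqrt (pi / t) * exp ((s * w i)\<^sup>2 / (4 * t)))"
    by (rule prod_ennreal) (use t in auto)
  also have "(\<Prod>i\<in>{..<n}. sqrt (pi / t) * exp ((s * w i)\<^sup>2 / (4 * t)))
      = sqrt (pi / t) ^ n * exp (s\<^sup>2 * (\<Sum>i<n. (w i)\<^sup>2) / (4 * t))"
    by (simp add: prod.distrib exp_sum[symmetric] sum_divide_distrib[symmetric] sum_distrib_left power_mult_distrib)
  also have "ennreal (exp (t * A - s * b)) * ennreal (sqrt (pi / t) ^ n * exp (s\<^sup>2 * (\<Sum>i<n. (w i)\<^sup>2) / (4 * t)))
      = ennreal (exp (t * A - s * b + s\<^sup>2 * (\<Sum>i<n. (w i)\<^sup>2) / (4 * t)) * sqrt (pi / t) ^ n)"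
    using t by (simp add: ennreal_mult[symmetric] exp_add mult_ac)
  finally show ?thesis unfolding S_def .
qed

lemma gauss_real:
  fixes a :: real assumes a: "a > 0" and n: "n > 0"
  shows "exp (real n / (2 * a) * a) * sqrt (pi / (real n / (2 * a))) ^ n = (2 * pi * exp 1 * a / real n) powr (real n / 2)"
proof -
  have pos: "pi / (real n / (2 * a)) > 0" using a n by (simp add: pi_gt_zero)
  have e1: "pi / (real n / (2 * a)) = 2 * pi * a / real n" using a n by (simp add: field_simps)
  have "sqrt (pi / (real n / (2 * a))) ^ n = (2 * pi * a / real n) powr (real n / 2)"
  proof -
    have "sqrt (pi / (real n / (2 * a))) = (2 * pi * a / real n) powr (1/2)"
      unfolding e1 by (rule powr_half_sqrt[symmetric]) (use pos e1 in linarith)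
    then have "sqrt (pi / (real n / (2 * a))) ^ n = ((2 * pi * a / real n) powr (1/2)) ^ n"
      by simp
    also have "\<dots> = (2 * pi * a / real n) powr (real n / 2)"
      by (subst powr_power) (use pos e1 n in auto)
    finally show ?thesis .
  qed
  moreover have "exp (real n / (2 * a) * a) = exp 1 powr (real n / 2)"
    using a by (simp add: powr_def)
  ultimately show ?thesis
    using a n by (simp add: powr_mult[symmetric] mult_ac pi_gt_zero)
qed

lemma ball_bound:
  assumes A: "A > 0" and n: "n > 0"
  shows "emeasure (Rn n) {x\<in>space (Rn n). (\<Sum>i<n. (x i)\<^sup>2) \<le> A}
    \<le> ennreal ((2 * pi * exp 1 * A / real n) powr (real n / 2))"
proof -
  have t: "real n / (2 * A) > 0" using A n by simp
  have "{x\<in>space (Rn n). (\<Sum>i<n. (x i)\<^sup>2) \<le> A} = {x\<in>space (Rn n). (\<Sum>i<n. (x i)\<^sup>2) \<le> A \<and> 0 \<le> (\<Sum>i<n. x i * 0)}"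
    by simp
  also have "emeasure (Rn n) \<dots> \<le> ennreal (exp (real n / (2 * A) * A - 0 * 0 + 0\<^sup>2 * (\<Sum>i<n. (0::real)\<^sup>2) / (4 * (real n / (2 * A)))) * sqrt (pi / (real n / (2 * A))) ^ n)"
    by (rule gauss_bound[OF t]) simp
  also have "\<dots> = ennreal ((2 * pi * exp 1 * A / real n) powr (real n / 2))"
    using gauss_real[OF A n] by simp
  finally show ?thesis .
qed

lemma cap_bound:
  assumes n: "n > 0" and W: "(\<Sum>i<n. (w i)\<^sup>2) = W" "W > 0" and b: "b \<ge> 0"
    and a: "A - b\<^sup>2 / W > 0"
  shows "emeasure (Rn n) {x\<in>space (Rn n). (\<Sum>i<n. (x i)\<^sup>2) \<le> A \<and> b \<le> (\<Sum>i<n. x i * w i)}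
    \<le> ennreal ((2 * pi * exp 1 * (A - b\<^sup>2 / W) / real n) powr (real n / 2))"
proof -
  define a' where "a' = A - b\<^sup>2 / W"
  define t where "t = real n / (2 * a')"
  have t: "t > 0" using a n by (simp add: t_def a'_def)
  have s: "2 * t * b / W \<ge> 0" using t b W by simp
  have "emeasure (Rn n) {x\<in>space (Rn n). (\<Sum>i<n. (x i)\<^sup>2) \<le> A \<and> b \<le> (\<Sum>i<n. x i * w i)}
     \<le> ennreal (exp (t * A - (2 * t * b / W) * b + (2 * t * b / W)\<^sup>2 * (\<Sum>i<n. (w i)\<^sup>2) / (4 * t)) * sqrt (pi / t) ^ n)"
    by (rule gauss_bound[OF t s])
  also have "t * A - (2 * t * b / W) * b + (2 * t * b / W)\<^sup>2 * (\<Sum>i<n. (w i)\<^sup>2) / (4 * t) = t * a'"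
    using t W by (simp add: a'_def field_simps power2_eq_square)
  also have "exp (t * a') * sqrt (pi / t) ^ n = (2 * pi * exp 1 * a' / real n) powr (real n / 2)"
    unfolding t_def by (rule gauss_real) (use a n in \<open>auto simp: a'_def\<close>)
  finally show ?thesis by (simp add: a'_def)
qed




lemma vor_bounded:
  assumes "lattice_basis n B"
  shows "\<exists>K. \<forall>x\<in>voronoi n (lattice n B). (\<Sum>i<n. (x i)\<^sup>2) \<le> K"
proof -
  obtain C where C: "\<And>x::nat\<Rightarrow>real. \<And>i. i < n \<Longrightarrow> x i = (\<Sum>j<n. C i j * (\<Sum>k<n. B j k * x k))"
    using lattice_basis_left_inverse[OF assms] by blast
  define c where "c j = (\<Sum>i<n. (B j i)\<^sup>2) / 2" for j
  define K where "K i = (\<Sum>j<n. \<bar>C i j\<bar> * c j)" for i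
  show ?thesis
  proof (intro exI ballI)
    fix x assume x: "x \<in> voronoi n (lattice n B)"
    have xi: "\<bar>x i\<bar> \<le> K i" if i: "i < n" for i
    proof -
      have "\<bar>x i\<bar> = \<bar>\<Sum>j<n. C i j * (\<Sum>k<n. B j k * x k)\<bar>" using C[OF i] by metis
      also have "\<dots> \<le> (\<Sum>j<n. \<bar>C i j * (\<Sum>k<n. B j k * x k)\<bar>)" by (rule sum_abs)
      also have "\<dots> \<le> (\<Sum>j<n. \<bar>C i j\<bar> * c j)"
      proof (rule sum_mono)
        fix j assume j: "j \<in> {..<n}"
        have "\<bar>\<Sum>k<n. B j k * x k\<bar> \<le> c j"
          using vor_halfspace[OF x, of j] j unfolding c_def by (simp add: mult.commute)
        then show "\<bar>C i j * (\<Sum>k<n. B j k * x k)\<bar> \<le> \<bar>C i j\<bar> * c j"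
          by (simp add: abs_mult mult_left_mono)
      qed
      finally show ?thesis unfolding K_def .
    qed
    show "(\<Sum>i<n. (x i)\<^sup>2) \<le> (\<Sum>i<n. (K i)\<^sup>2)"
    proof (rule sum_mono)
      fix i assume "i \<in> {..<n}"
      then have "\<bar>x i\<bar> \<le> K i" using xi by simp
      then show "(x i)\<^sup>2 \<le> (K i)\<^sup>2"
        by (metis abs_ge_zero abs_le_self_iff order_trans power2_abs power_mono)
    qed
  qed
qed




definition lpt :: "nat \<Rightarrow> (nat \<Rightarrow> nat \<Rightarrow> real) \<Rightarrow> int list \<Rightarrow> nat \<Rightarrow> real" where
  "lpt n B ks = restrict (\<lambda>i. \<Sum>j<n. real_of_int (ks ! j) * B j i) {..<n}"

lemma lattice_lpt: "lattice n B = range (lpt n B)"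
proof
  show "lattice n B \<subseteq> range (lpt n B)"
  proof
    fix l assume "l \<in> lattice n B"
    then obtain k where l: "l = restrict (\<lambda>i. \<Sum>j<n. real_of_int (k j) * B j i) {..<n}"
      unfolding Defs.lattice_def by blast
    have "l = lpt n B (map k [0..<n])" unfolding l lpt_def
      by (intro restrict_ext sum.cong) auto
    then show "l \<in> range (lpt n B)" by blast
  qed
  show "range (lpt n B) \<subseteq> lattice n B"
    unfolding Defs.lattice_def lpt_def by blast
qed

lemma sum_comp_meas:
  fixes f :: "nat \<Rightarrow> real \<Rightarrow> real"
  assumes "\<And>i. i < n \<Longrightarrow> f i \<in> borel_measurable borel"
  shows "(\<lambda>x. \<Sum>i<n. f i (x i)) \<in> borel_measurable (Rn n)"
proof -
  have "\<And>i. i \<in> {..<n} \<Longrightarrow> (\<lambda>x. f i (x i)) \<in> borel_measurable (Rn n)"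
    using measurable_compose[OF meas_comp assms] by auto
  from borel_measurable_sum[where f="\<lambda>i x. f i (x i)" and S="{..<n}" and M="Rn n", OF this] show ?thesis by simp
qed

lemma sq_meas[measurable]: "(\<lambda>x. \<Sum>i<n. (x i)\<^sup>2) \<in> borel_measurable (Rn n)"
  using sum_comp_meas[of n "\<lambda>i y. y\<^sup>2"] by simp

lemma sqd_meas[measurable]: "(\<lambda>x. \<Sum>i<n. (x i - c i)\<^sup>2) \<in> borel_measurable (Rn n)"
  using sum_comp_meas[of n "\<lambda>i y. (y - c i)\<^sup>2"] by simp

lemma ip_meas[measurable]: "(\<lambda>x. \<Sum>i<n. x i * c i) \<in> borel_measurable (Rn n)"
  using sum_comp_meas[of n "\<lambda>i y. y * c i"] by simp

lemma vor_sets: "voronoi n (lattice n B) \<in> sets (Rn n)"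
proof -
  have "voronoi n (lattice n B) = {x\<in>space (Rn n). \<forall>ks. vnorm n x \<le> vnorm n (\<lambda>i. x i - lpt n B ks i)}"
    unfolding voronoi_def lattice_lpt by auto
  also have "\<dots> \<in> sets (Rn n)"
  proof (rule sets.sets_Collect_countable_All)
    fix ks
    have [measurable]: "(\<lambda>x. vnorm n x) \<in> borel_measurable (Rn n)"
      unfolding vnorm_def by measurable
    have [measurable]: "(\<lambda>x. vnorm n (\<lambda>i. x i - lpt n B ks i)) \<in> borel_measurable (Rn n)"
      unfolding vnorm_def by measurable
    show "{x\<in>space (Rn n). vnorm n x \<le> vnorm n (\<lambda>i. x i - lpt n B ks i)} \<in> sets (Rn n)"
      by measurable
  qed
  finally show ?thesis .
qed

lemma unif_nonzero:
  assumes V: "V \<in> sets M" and ps: "prob_space (uniform_measure M V)"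
  shows "emeasure M V \<noteq> 0" "emeasure M V \<noteq> \<infinity>"
proof -
  have "emeasure (uniform_measure M V) (space M) = 1"
    using prob_space.emeasure_space_1[OF ps] by simp
  then have *: "emeasure M V / emeasure M V = 1"
    using V by (simp add: sets.sets_into_space Int_absorb2)
  show "emeasure M V \<noteq> 0" using * by (intro notI) simp
  show "emeasure M V \<noteq> \<infinity>" using * by (intro notI) simp
qed

lemma unif_le:
  assumes V: "V \<in> sets M" and ps: "prob_space (uniform_measure M V)"
    and A: "A \<in> sets M" and le: "emeasure M A \<le> ennreal c" and c: "c \<ge> 0"
  shows "measure (uniform_measure M V) A \<le> c / measure M V"
proof -
  note nz = unif_nonzero[OF V ps]
  have "measure (uniform_measure M V) A = measure M (V \<inter> A) / measure M V"
    using nz A by simp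
  moreover have "measure M (V \<inter> A) \<le> c"
  proof -
    have "emeasure M (V \<inter> A) \<le> emeasure M A" using A by (intro emeasure_mono) auto
    with le have "emeasure M (V \<inter> A) \<le> ennreal c" by order
    then show ?thesis unfolding measure_def by (intro enn2real_leI c)
  qed
  moreover have "measure M V \<ge> 0" by simp
  ultimately show ?thesis by (simp add: divide_right_mono)
qed

lemma powr_tendsto_zero:
  fixes x :: "nat \<Rightarrow> real"
  assumes lim: "x \<longlonglongrightarrow> c" and c: "c < 1" and nn: "\<And>n. x n \<ge> 0"
  shows "(\<lambda>n. x n powr (real n / 2)) \<longlonglongrightarrow> 0"
proof -
  define r where "r = (1 + max c 0) / 2"
  have r: "0 < r" "r < 1" "c < r" using c by (auto simp: r_def)
  have ev: "eventually (\<lambda>n. x n < r) sequentially"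
    using lim r(3) by (rule order_tendstoD)
  have rl: "(\<lambda>n. (r powr (1/2)) ^ n) \<longlonglongrightarrow> 0"
  proof (rule LIMSEQ_power_zero)
    have "r powr (1/2) < 1 powr (1/2)" using r by (intro powr_less_mono2) auto
    then show "norm (r powr (1/2)) < 1" using r by simp
  qed
  show ?thesis
  proof (rule tendsto_sandwich[OF _ _ tendsto_const rl])
    show "eventually (\<lambda>n. 0 \<le> x n powr (real n / 2)) sequentially" by simp
    show "eventually (\<lambda>n. x n powr (real n / 2) \<le> (r powr (1/2)) ^ n) sequentially"
      using ev
    proof eventually_elim
      case (elim n)
      have "x n powr (real n / 2) \<le> r powr (real n / 2)"
        using elim nn[of n] by (intro powr_mono2) auto
      also have "\<dots> = (r powr (1/2)) ^ n" using r by (subst powr_power) auto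
      finally show ?case .
    qed
  qed
qed

lemma nsm_ratio:
  assumes V: "V > 0" and n: "n > 0" and k: "k \<ge> 0" and N: "N \<ge> 0"
    and s: "s = N * V powr (2 / real n)"
  shows "(2 * pi * exp 1 * (k * real n * s) / real n) powr (real n / 2) / V
       = (2 * pi * exp 1 * k * N) powr (real n / 2)"
proof -
  have "2 * pi * exp 1 * (k * real n * s) / real n = (2 * pi * exp 1 * k * N) * V powr (2 / real n)"
    using n by (simp add: s field_simps)
  then have "(2 * pi * exp 1 * (k * real n * s) / real n) powr (real n / 2)
      = (2 * pi * exp 1 * k * N) powr (real n / 2) * (V powr (2 / real n)) powr (real n / 2)"
    by (simp add: powr_mult)
  also have "(V powr (2 / real n)) powr (real n / 2) = V"
    using n V by (simp add: powr_powr)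
  finally show ?thesis using V by simp
qed




definition refl_n :: "nat \<Rightarrow> (nat \<Rightarrow> real) \<Rightarrow> nat \<Rightarrow> real" where
  "refl_n n x = restrict (\<lambda>i. - x i) {..<n}"

lemma refl_meas[measurable]: "refl_n n \<in> Rn n \<rightarrow>\<^sub>M Rn n"
  unfolding refl_n_def Rn_def by measurable

lemma refl_space: "x \<in> space (Rn n) \<Longrightarrow> refl_n n x \<in> space (Rn n)"
  using measurable_space[OF refl_meas] .

lemma refl_refl: "x \<in> space (Rn n) \<Longrightarrow> refl_n n (refl_n n x) = x"
  unfolding refl_n_def Rn_def by (auto simp: space_PiM PiE_def extensional_def)

lemma refl_distr: "distr (Rn n) (Rn n) (refl_n n) = Rn n"
proof -
  interpret product_sigma_finite "\<lambda>_::nat. lborel :: real measure" by (rule psf_lborel)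
  show ?thesis unfolding Rn_def
  proof (rule PiM_eqI)
    show "finite {..<n}" by simp
    show "sets (distr (Pi\<^sub>M {..<n} (\<lambda>_. lborel)) (Pi\<^sub>M {..<n} (\<lambda>_. lborel)) (refl_n n)) = sets (Pi\<^sub>M {..<n} (\<lambda>_. lborel))"
      by simp
    fix A assume A: "\<And>i. i \<in> {..<n} \<Longrightarrow> A i \<in> sets (lborel :: real measure)"
    have mA: "Pi\<^sub>E {..<n} A \<in> sets (Pi\<^sub>M {..<n} (\<lambda>_. lborel :: real measure))"
      using A by (intro sets_PiM_I_finite) auto
    have pre: "refl_n n -` Pi\<^sub>E {..<n} A \<inter> space (Pi\<^sub>M {..<n} (\<lambda>_. lborel)) = Pi\<^sub>E {..<n} (\<lambda>i. uminus -` A i)"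
      unfolding refl_n_def by (auto simp: space_PiM PiE_def Pi_def extensional_def)
    have mA': "\<And>i. i \<in> {..<n} \<Longrightarrow> uminus -` A i \<in> sets (lborel :: real measure)"
      using A by (auto intro: measurable_sets[of uminus lborel lborel, simplified])
    have e: "emeasure lborel (uminus -` A i) = emeasure lborel (A i)" if i: "i \<in> {..<n}" for i
    proof -
      have "emeasure lborel (A i) = emeasure (distr lborel borel uminus) (A i)"
        by (simp add: lborel_distr_uminus)
      also have "\<dots> = emeasure lborel (uminus -` A i)"
        using A[OF i] by (subst emeasure_distr) auto
      finally show ?thesis by simp
    qed
    have "emeasure (distr (Pi\<^sub>M {..<n} (\<lambda>_. lborel)) (Pi\<^sub>M {..<n} (\<lambda>_. lborel)) (refl_n n)) (Pi\<^sub>E {..<n} A)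
        = emeasure (Pi\<^sub>M {..<n} (\<lambda>_. lborel)) (Pi\<^sub>E {..<n} (\<lambda>i. uminus -` A i))"
      using mA refl_meas[of n] unfolding Rn_def by (subst emeasure_distr) (auto simp: pre)
    also have "\<dots> = (\<Prod>i\<in>{..<n}. emeasure lborel (uminus -` A i))"
      using mA' by (subst emeasure_PiM) auto
    also have "\<dots> = (\<Prod>i\<in>{..<n}. emeasure lborel (A i))"
      using e by (intro prod.cong) auto
    finally show "emeasure (distr (Pi\<^sub>M {..<n} (\<lambda>_. lborel)) (Pi\<^sub>M {..<n} (\<lambda>_. lborel)) (refl_n n)) (Pi\<^sub>E {..<n} A)
        = (\<Prod>i\<in>{..<n}. emeasure lborel (A i))" .
  qed
qed

lemma vnorm_cong: "(\<And>i. i < n \<Longrightarrow> f i = g i) \<Longrightarrow> vnorm n f = vnorm n g"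
  unfolding vnorm_def by (intro arg_cong[where f=sqrt] sum.cong) auto

lemma vor_refl:
  assumes x: "x \<in> voronoi n (lattice n B)"
  shows "refl_n n x \<in> voronoi n (lattice n B)"
proof -
  have xs: "x \<in> space (Rn n)" using x unfolding voronoi_def by auto
  have "vnorm n (refl_n n x) \<le> vnorm n (\<lambda>i. refl_n n x i - l i)" if l: "l \<in> lattice n B" for l
  proof -
    obtain k where k: "l = restrict (\<lambda>i. \<Sum>j<n. real_of_int (k j) * B j i) {..<n}"
      using l unfolding Defs.lattice_def by blast
    define l' where "l' = restrict (\<lambda>i. \<Sum>j<n. real_of_int ((\<lambda>j. - k j) j) * B j i) {..<n}"
    have l': "l' \<in> lattice n B" unfolding Defs.lattice_def l'_def
      by (rule CollectI, rule exI[where x="\<lambda>j. - k j"]) simp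
    have l'i: "l' i = - l i" if "i < n" for i
      using that by (simp add: l'_def k sum_negf[symmetric])
    have "vnorm n (refl_n n x) = vnorm n x"
      unfolding vnorm_def refl_n_def by simp
    also have "\<dots> \<le> vnorm n (\<lambda>i. x i - l' i)" using x l' unfolding voronoi_def by auto
    also have "\<dots> = vnorm n (\<lambda>i. refl_n n x i - l i)"
    proof -
      have "vnorm n (\<lambda>i. x i - l' i) = vnorm n (\<lambda>i. - (refl_n n x i - l i))"
        by (rule vnorm_cong) (simp add: l'i refl_n_def)
      also have "\<dots> = vnorm n (\<lambda>i. refl_n n x i - l i)"
        unfolding vnorm_def by (simp add: power2_commute)
      finally show ?thesis .
    qed
    finally show ?thesis .
  qed
  then show ?thesis using refl_space[OF xs] unfolding voronoi_def by auto
qed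

lemma vor_refl_iff:
  assumes x: "x \<in> space (Rn n)"
  shows "refl_n n x \<in> voronoi n (lattice n B) \<longleftrightarrow> x \<in> voronoi n (lattice n B)"
  using vor_refl[of "refl_n n x" n B] vor_refl[of x n B] refl_refl[OF x] by auto

lemma unif_refl:
  assumes ps: "prob_space (uniform_measure (Rn n) (voronoi n (lattice n B)))"
  shows "distr (uniform_measure (Rn n) (voronoi n (lattice n B))) (Rn n) (refl_n n)
       = uniform_measure (Rn n) (voronoi n (lattice n B))"
    (is "distr ?P _ _ = ?P")
proof (rule measure_eqI)
  let ?V = "voronoi n (lattice n B)"
  note Vs = vor_sets[of n B]
  show "sets (distr ?P (Rn n) (refl_n n)) = sets ?P" by simp
  fix A assume "A \<in> sets (distr ?P (Rn n) (refl_n n))"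
  then have A: "A \<in> sets (Rn n)" by simp
  have rm: "refl_n n \<in> ?P \<rightarrow>\<^sub>M Rn n"
    by (subst measurable_cong_sets[OF sets_uniform_measure refl]) (rule refl_meas)
  have pre: "refl_n n -` A \<inter> space (Rn n) \<in> sets (Rn n)" by (rule measurable_sets[OF refl_meas A])
  have set_eq: "?V \<inter> (refl_n n -` A \<inter> space (Rn n)) = refl_n n -` (?V \<inter> A) \<inter> space (Rn n)"
  proof (rule Set.set_eqI)
    fix x
    show "x \<in> ?V \<inter> (refl_n n -` A \<inter> space (Rn n)) \<longleftrightarrow> x \<in> refl_n n -` (?V \<inter> A) \<inter> space (Rn n)"
      by (cases "x \<in> space (Rn n)") (simp_all add: vor_refl_iff)
  qed
  have "emeasure (distr ?P (Rn n) (refl_n n)) A = emeasure ?P (refl_n n -` A \<inter> space (Rn n))"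
    using A rm by (subst emeasure_distr) simp_all
  also have "\<dots> = emeasure (Rn n) (?V \<inter> (refl_n n -` A \<inter> space (Rn n))) / emeasure (Rn n) ?V"
    using Vs pre by simp
  also have "emeasure (Rn n) (?V \<inter> (refl_n n -` A \<inter> space (Rn n))) = emeasure (distr (Rn n) (Rn n) (refl_n n)) (?V \<inter> A)"
    unfolding set_eq using Vs A by (subst emeasure_distr) auto
  also have "\<dots> = emeasure (Rn n) (?V \<inter> A)" by (simp add: refl_distr)
  also have "emeasure (Rn n) (?V \<inter> A) / emeasure (Rn n) ?V = emeasure ?P A"
    using Vs A by simp
  finally show "emeasure (distr ?P (Rn n) (refl_n n)) A = emeasure ?P A" .
qed

lemma unif_mean_zero:
  assumes ps: "prob_space (uniform_measure (Rn n) (voronoi n (lattice n B)))" and i: "i < n"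
  shows "(\<integral>x. x i \<partial>uniform_measure (Rn n) (voronoi n (lattice n B))) = 0"
proof -
  let ?P = "uniform_measure (Rn n) (voronoi n (lattice n B))"
  have rm: "refl_n n \<in> ?P \<rightarrow>\<^sub>M Rn n"
    by (subst measurable_cong_sets[OF sets_uniform_measure refl]) (rule refl_meas)
  have "(\<integral>x. x i \<partial>?P) = (\<integral>x. x i \<partial>distr ?P (Rn n) (refl_n n))"
    by (subst unif_refl[OF ps]) (rule refl)
  also have "\<dots> = (\<integral>x. refl_n n x i \<partial>?P)"
    using rm meas_comp[OF i] by (subst integral_distr) simp_all
  also have "\<dots> = (\<integral>x. - x i \<partial>?P)" using i by (simp add: refl_n_def)
  also have "\<dots> = - (\<integral>x. x i \<partial>?P)" by simp
  finally show ?thesis by simp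
qed




lemma U_facts:
  fixes M :: "'a measure" and U :: "'a \<Rightarrow> nat \<Rightarrow> real"
  assumes M: "prob_space M" and Um: "U \<in> M \<rightarrow>\<^sub>M Rn n"
    and dist: "distr M (Rn n) U = uniform_measure (Rn n) (voronoi n (lattice n B))"
    and lb: "lattice_basis n B"
  shows "prob_space (uniform_measure (Rn n) (voronoi n (lattice n B)))"
    and "cell_volume n (lattice n B) > 0"
    and "integrable M (\<lambda>\<omega>. \<Sum>i<n. (U \<omega> i)\<^sup>2)"
    and "\<And>i. i < n \<Longrightarrow> integrable M (\<lambda>\<omega>. U \<omega> i)"
    and "\<And>i. i < n \<Longrightarrow> (\<integral>\<omega>. U \<omega> i \<partial>M) = 0"
    and "(\<integral>\<omega>. (\<Sum>i<n. (U \<omega> i)\<^sup>2) \<partial>M) = real n * second_moment n (lattice n B)"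
    and "\<And>A c. A \<in> sets (Rn n) \<Longrightarrow> emeasure (Rn n) A \<le> ennreal c \<Longrightarrow> c \<ge> 0 \<Longrightarrow>
           measure M {\<omega>\<in>space M. U \<omega> \<in> A} \<le> c / cell_volume n (lattice n B)"
proof -
  let ?V = "voronoi n (lattice n B)"
  let ?P = "uniform_measure (Rn n) ?V"
  note Vs = vor_sets[of n B]
  show ps: "prob_space ?P"
    using prob_space.prob_space_distr[OF M Um] dist by simp
  note nz = unif_nonzero[OF Vs ps]
  have eV: "emeasure (Rn n) ?V = ennreal (measure (Rn n) ?V)"
    using nz(2) by (simp add: emeasure_eq_ennreal_measure)
  have "measure (Rn n) ?V \<noteq> 0" using nz(1) eV by auto
  then show Vpos: "cell_volume n (lattice n B) > 0"
    using measure_nonneg[of "Rn n" ?V] unfolding cell_volume_def by linarith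
  interpret P: prob_space ?P by (rule ps)
  obtain K where K: "\<And>x. x \<in> ?V \<Longrightarrow> (\<Sum>i<n. (x i)\<^sup>2) \<le> K"
    using vor_bounded[OF lb] by blast
  have AEV: "AE x in ?P. x \<in> ?V"
    by (rule AE_uniform_measureI[OF Vs]) simp
  have sq_int: "integrable ?P (\<lambda>x. \<Sum>i<n. (x i)\<^sup>2)"
  proof (rule P.integrable_const_bound[where B=K])
    show "AE x in ?P. norm (\<Sum>i<n. (x i)\<^sup>2) \<le> K"
      using AEV by eventually_elim (use K in \<open>auto simp: sum_nonneg\<close>)
  qed simp
  have comp_int: "integrable ?P (\<lambda>x. x i)" if i: "i < n" for i
  proof (rule P.integrable_const_bound[where B="1 + K"])
    show "AE x in ?P. norm (x i) \<le> 1 + K"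
      using AEV
    proof eventually_elim
      case (elim x)
      have "(x i)\<^sup>2 \<le> (\<Sum>i<n. (x i)\<^sup>2)"
        using i by (intro member_le_sum) auto
      moreover have "\<bar>x i\<bar> \<le> 1 + (x i)\<^sup>2"
      proof -
        have h: "(x i)\<^sup>2 = \<bar>x i\<bar> * \<bar>x i\<bar>" by (simp add: power2_eq_square abs_mult_self_eq)
        have "0 \<le> (\<bar>x i\<bar> - 1)\<^sup>2" by simp
        then have "0 \<le> \<bar>x i\<bar> * \<bar>x i\<bar> - 2 * \<bar>x i\<bar> + 1" by (simp add: power2_eq_square algebra_simps)
        then show ?thesis using h by (simp add: algebra_simps)
      qed
      ultimately show ?case using K[OF elim] by simp
    qed
  qed (use meas_comp[OF i] in simp)
  show "integrable M (\<lambda>\<omega>. \<Sum>i<n. (U \<omega> i)\<^sup>2)"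
    using sq_int integrable_distr_eq[OF Um sq_meas[of n]] dist by simp
  show "integrable M (\<lambda>\<omega>. U \<omega> i)" if i: "i < n" for i
    using comp_int[OF i] integrable_distr_eq[OF Um meas_comp[OF i]] dist by simp
  show "(\<integral>\<omega>. U \<omega> i \<partial>M) = 0" if i: "i < n" for i
  proof -
    have "(\<integral>\<omega>. U \<omega> i \<partial>M) = (\<integral>x. x i \<partial>distr M (Rn n) U)"
      by (rule integral_distr[OF Um meas_comp[OF i], symmetric])
    also have "\<dots> = 0" unfolding dist by (rule unif_mean_zero[OF ps i])
    finally show ?thesis .
  qed
  show "(\<integral>\<omega>. (\<Sum>i<n. (U \<omega> i)\<^sup>2) \<partial>M) = real n * second_moment n (lattice n B)"
  proof -
    have "(\<integral>\<omega>. (\<Sum>i<n. (U \<omega> i)\<^sup>2) \<partial>M) = (\<integral>x. (\<Sum>i<n. (x i)\<^sup>2) \<partial>distr M (Rn n) U)"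
      by (rule integral_distr[OF Um sq_meas, symmetric])
    also have "\<dots> = (\<integral>x. (vnorm n x)\<^sup>2 \<partial>?P)"
      unfolding dist vnorm_def by (intro Bochner_Integration.integral_cong refl) (simp add: sum_nonneg)
    finally show ?thesis
      unfolding second_moment_def by (cases "n = 0") simp_all
  qed
  show "measure M {\<omega>\<in>space M. U \<omega> \<in> A} \<le> c / cell_volume n (lattice n B)"
    if A: "A \<in> sets (Rn n)" and le: "emeasure (Rn n) A \<le> ennreal c" and c: "c \<ge> 0" for A c
  proof -
    have "measure M {\<omega>\<in>space M. U \<omega> \<in> A} = measure (distr M (Rn n) U) A"
    proof -
      have "{\<omega>\<in>space M. U \<omega> \<in> A} = U -` A \<inter> space M" by blast
      then show ?thesis using measure_distr[OF Um A] by simp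
    qed
    also have "\<dots> \<le> c / cell_volume n (lattice n B)"
      unfolding dist cell_volume_def by (rule unif_le[OF Vs ps A le c])
    finally show ?thesis .
  qed
qed




lemma tail_from_mean:
  fixes X :: "'a \<Rightarrow> real"
  assumes M: "prob_space M" and X: "integrable M X" and nn: "\<And>\<omega>. \<omega> \<in> space M \<Longrightarrow> X \<omega> \<ge> 0"
    and m: "(\<integral>\<omega>. X \<omega> \<partial>M) = m" "m > 0" and g: "0 \<le> g" "g < 1" and d: "d > 0"
    and p: "measure M {\<omega>\<in>space M. X \<omega> \<le> (1 - g) * m} \<le> p"
  shows "measure M {\<omega>\<in>space M. X \<omega> > (1 + d) * m} \<le> (g + p) / d"
proof -
  interpret prob_space M by (rule M)
  have Xm[measurable]: "X \<in> borel_measurable M" using X by auto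
  define a where "a = (1 - g) * m"
  define b where "b = (1 + d) * m"
  define A where "A = {\<omega>\<in>space M. X \<omega> > a}"
  define Bs where "Bs = {\<omega>\<in>space M. X \<omega> > b}"
  have As[measurable]: "A \<in> sets M" and Bss[measurable]: "Bs \<in> sets M" unfolding A_def Bs_def by measurable
  have a0: "a \<ge> 0" "a < b" using g m d by (auto simp: a_def b_def mult_nonneg_nonneg)
  have "(\<integral>\<omega>. a * indicator A \<omega> + (b - a) * indicator Bs \<omega> \<partial>M) \<le> (\<integral>\<omega>. X \<omega> \<partial>M)"
  proof (rule integral_mono)
    show "integrable M (\<lambda>\<omega>. a * indicator A \<omega> + (b - a) * indicator Bs \<omega>)"
      by (intro Bochner_Integration.integrable_add integrable_mult_right integrable_real_indicator) (auto simp: less_top[symmetric])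
    show "integrable M X" by (rule X)
    fix \<omega> assume w: "\<omega> \<in> space M"
    show "a * indicator A \<omega> + (b - a) * indicator Bs \<omega> \<le> X \<omega>"
      using w a0 nn[OF w] by (auto simp: A_def Bs_def indicator_def)
  qed
  also have "(\<integral>\<omega>. a * indicator A \<omega> + (b - a) * indicator Bs \<omega> \<partial>M) = a * prob A + (b - a) * prob Bs"
    by (subst Bochner_Integration.integral_add) (auto intro!: integrable_mult_right integrable_real_indicator simp: less_top[symmetric])
  finally have ineq: "a * prob A + (b - a) * prob Bs \<le> m" using m by simp
  have "prob A = 1 - prob (space M - A)" using prob_compl[OF As] by simp
  moreover have "space M - A = {\<omega>\<in>space M. X \<omega> \<le> (1 - g) * m}" unfolding A_def a_def by auto
  ultimately have pA: "prob A \<ge> 1 - p" using p by simp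
  have "a * (1 - p) \<le> a * prob A" using pA a0 by (intro mult_left_mono) auto
  with ineq have "(b - a) * prob Bs \<le> m - a * (1 - p)" by simp
  also have "m - a * (1 - p) = m * (g + p - g * p)" unfolding a_def by (simp add: algebra_simps)
  also have "\<dots> \<le> m * (g + p)"
  proof -
    have "p \<ge> 0" using p measure_nonneg[of M "{\<omega>\<in>space M. X \<omega> \<le> (1 - g) * m}"] by linarith
    then show ?thesis using m g by (intro mult_left_mono) (auto simp: mult_nonneg_nonneg)
  qed
  finally have "(d + g) * m * prob Bs \<le> (g + p) * m"
    unfolding a_def b_def by (simp add: algebra_simps)
  then have "(d + g) * prob Bs \<le> g + p" using m by (simp add: mult.commute mult.left_commute)
  then have "d * prob Bs \<le> g + p" using g measure_nonneg[of M Bs]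
    by (smt (verit) mult_nonneg_nonneg distrib_right)
  then show ?thesis using d unfolding Bs_def b_def by (simp add: field_simps)
qed

lemma pair_bound:
  fixes M :: "'a measure"
  assumes M: "prob_space M" and X: "X \<in> M \<rightarrow>\<^sub>M Rn n" and Y: "Y \<in> M \<rightarrow>\<^sub>M Rn n"
    and ind: "prob_space.indep_var M (Rn n) X (Rn n) Y"
    and S: "S \<in> sets (Rn n \<Otimes>\<^sub>M Rn n)" and c: "c \<ge> 0"
    and bd: "\<And>v. v \<in> space (Rn n) \<Longrightarrow> emeasure (distr M (Rn n) Y) (Pair v -` S) \<le> ennreal c"
  shows "measure M {\<omega>\<in>space M. (X \<omega>, Y \<omega>) \<in> S} \<le> c"
proof -
  interpret prob_space M by (rule M)
  interpret PX: prob_space "distr M (Rn n) X" by (rule prob_space_distr[OF X])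
  interpret PY: prob_space "distr M (Rn n) Y" by (rule prob_space_distr[OF Y])
  have XY: "(\<lambda>\<omega>. (X \<omega>, Y \<omega>)) \<in> M \<rightarrow>\<^sub>M Rn n \<Otimes>\<^sub>M Rn n" using X Y by measurable
  have eq: "distr M (Rn n) X \<Otimes>\<^sub>M distr M (Rn n) Y = distr M (Rn n \<Otimes>\<^sub>M Rn n) (\<lambda>\<omega>. (X \<omega>, Y \<omega>))"
    using ind indep_var_distribution_eq by auto
  have "{\<omega>\<in>space M. (X \<omega>, Y \<omega>) \<in> S} = (\<lambda>\<omega>. (X \<omega>, Y \<omega>)) -` S \<inter> space M" by blast
  then have "measure M {\<omega>\<in>space M. (X \<omega>, Y \<omega>) \<in> S} = measure (distr M (Rn n) X \<Otimes>\<^sub>M distr M (Rn n) Y) S"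
    using measure_distr[OF XY S] eq by simp
  also have "\<dots> \<le> c"
  proof -
    have S': "S \<in> sets (distr M (Rn n) X \<Otimes>\<^sub>M distr M (Rn n) Y)" using S by simp
    have "emeasure (distr M (Rn n) X \<Otimes>\<^sub>M distr M (Rn n) Y) S
        = (\<integral>\<^sup>+v. emeasure (distr M (Rn n) Y) (Pair v -` S) \<partial>distr M (Rn n) X)"
      by (rule PY.emeasure_pair_measure_alt[OF S'])
    also have "\<dots> \<le> (\<integral>\<^sup>+v. ennreal c \<partial>distr M (Rn n) X)"
      by (intro nn_integral_mono) (use bd in simp)
    also have "\<dots> = ennreal c" using PX.emeasure_space_1 by simp
    finally show ?thesis unfolding measure_def by (intro enn2real_leI c)
  qed
  finally show ?thesis .
qed




lemma cross_bound:
  fixes a c \<alpha> \<beta> \<eta> R :: real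
  assumes a: "a \<ge> 0" and a0: "a = 0 \<Longrightarrow> c = 0"
    and nE3: "\<not> (0 < a \<and> \<eta> * sqrt a * R \<le> c * sgn (\<alpha> * \<beta>))"
    and \<eta>: "\<eta> \<ge> 0" and R: "R \<ge> 0"
  shows "\<alpha> * \<beta> * c \<le> \<bar>\<alpha> * \<beta>\<bar> * (\<eta> * sqrt a * R)"
proof -
  have nn: "0 \<le> \<eta> * sqrt a * R" using a \<eta> R by simp
  show ?thesis
  proof (cases "a = 0")
    case True then show ?thesis using a0 nn by simp
  next
    case False
    then have lt: "c * sgn (\<alpha> * \<beta>) < \<eta> * sqrt a * R" using nE3 a by auto
    consider "\<alpha> * \<beta> > 0" | "\<alpha> * \<beta> < 0" | "\<alpha> * \<beta> = 0" by linarith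
    then show ?thesis
    proof cases
      case 1
      then have "c < \<eta> * sqrt a * R" using lt by simp
      then show ?thesis using 1 by (simp add: mult_left_mono)
    next
      case 2
      then have "- c < \<eta> * sqrt a * R" using lt by simp
      then have "\<bar>\<alpha> * \<beta>\<bar> * (- c) \<le> \<bar>\<alpha> * \<beta>\<bar> * (\<eta> * sqrt a * R)" by (intro mult_left_mono) auto
      then show ?thesis using 2 by simp
    next
      case 3 then have "\<alpha> * \<beta> * c = 0" by simp
      moreover have "0 \<le> \<bar>\<alpha> * \<beta>\<bar> * (\<eta> * sqrt a * R)" using nn by simp
      ultimately show ?thesis by linarith
    qed
  qed
qed

lemma main_ineq:
  fixes a b c \<alpha> \<beta> \<eta> X Y :: real
  assumes a: "0 \<le> a" "a \<le> X" and b: "0 \<le> b" "b \<le> Y" and \<eta>: "\<eta> \<ge> 0"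
    and cr: "\<alpha> * \<beta> * c \<le> \<bar>\<alpha> * \<beta>\<bar> * (\<eta> * sqrt a * sqrt Y)"
  shows "\<alpha>\<^sup>2 * a + \<beta>\<^sup>2 * b + 2 * (\<alpha> * \<beta> * c) \<le> (1 + \<eta>) * (\<alpha>\<^sup>2 * X + \<beta>\<^sup>2 * Y)"
proof -
  have X: "X \<ge> 0" and Y: "Y \<ge> 0" using a b by auto
  have "sqrt a \<le> sqrt X" using a by simp
  then have "\<bar>\<alpha> * \<beta>\<bar> * (\<eta> * sqrt a * sqrt Y) \<le> \<bar>\<alpha> * \<beta>\<bar> * (\<eta> * sqrt X * sqrt Y)"
    using \<eta> Y by (intro mult_left_mono mult_right_mono) auto
  also have "\<dots> = \<eta> * ((\<bar>\<alpha>\<bar> * sqrt X) * (\<bar>\<beta>\<bar> * sqrt Y))" by (simp add: abs_mult mult_ac)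
  finally have c1: "\<alpha> * \<beta> * c \<le> \<eta> * ((\<bar>\<alpha>\<bar> * sqrt X) * (\<bar>\<beta>\<bar> * sqrt Y))" using cr by linarith
  have amgm: "2 * ((\<bar>\<alpha>\<bar> * sqrt X) * (\<bar>\<beta>\<bar> * sqrt Y)) \<le> \<alpha>\<^sup>2 * X + \<beta>\<^sup>2 * Y"
  proof -
    have "0 \<le> (\<bar>\<alpha>\<bar> * sqrt X - \<bar>\<beta>\<bar> * sqrt Y)\<^sup>2" by simp
    moreover have "(\<bar>\<alpha>\<bar> * sqrt X)\<^sup>2 = \<alpha>\<^sup>2 * X" using X by (simp add: power_mult_distrib)
    moreover have "(\<bar>\<beta>\<bar> * sqrt Y)\<^sup>2 = \<beta>\<^sup>2 * Y" using Y by (simp add: power_mult_distrib)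
    ultimately show ?thesis by (simp add: power2_diff)
  qed
  have "2 * (\<alpha> * \<beta> * c) \<le> \<eta> * (\<alpha>\<^sup>2 * X + \<beta>\<^sup>2 * Y)"
    using c1 mult_left_mono[OF amgm \<eta>] by (simp add: algebra_simps)
  moreover have "\<alpha>\<^sup>2 * a \<le> \<alpha>\<^sup>2 * X" using a by (simp add: mult_left_mono)
  moreover have "\<beta>\<^sup>2 * b \<le> \<beta>\<^sup>2 * Y" using b by (simp add: mult_left_mono)
  ultimately show ?thesis by (simp add: algebra_simps)
qed

lemma vnorm_sq: "(vnorm n x)\<^sup>2 = (\<Sum>i<n. (x i)\<^sup>2)"
  unfolding vnorm_def by (simp add: sum_nonneg)

lemma vnorm_meas[measurable]: "vnorm n \<in> borel_measurable (Rn n)"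
proof -
  have "(\<lambda>x. sqrt (\<Sum>i<n. (x i)\<^sup>2)) \<in> borel_measurable (Rn n)" by measurable
  then show ?thesis unfolding vnorm_def[abs_def] .
qed

lemma Z_facts:
  fixes M :: "'a measure" and N U :: "'a \<Rightarrow> nat \<Rightarrow> real" and \<alpha> \<beta> :: real
  assumes M: "prob_space M" and Nm: "N \<in> M \<rightarrow>\<^sub>M Rn n"
    and Nint: "integrable M (\<lambda>\<omega>. (vnorm n (N \<omega>))\<^sup>2)"
    and Um: "U \<in> M \<rightarrow>\<^sub>M Rn n"
    and dist: "distr M (Rn n) U = uniform_measure (Rn n) (voronoi n (lattice n B))"
    and lb: "lattice_basis n B"
    and ind: "prob_space.indep_var M (Rn n) N (Rn n) U"
  shows "(\<lambda>\<omega>. restrict (\<lambda>i. \<alpha> * N \<omega> i + \<beta> * U \<omega> i) {..<n}) \<in> M \<rightarrow>\<^sub>M Rn n"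
    and "integrable M (\<lambda>\<omega>. (vnorm n (restrict (\<lambda>i. \<alpha> * N \<omega> i + \<beta> * U \<omega> i) {..<n}))\<^sup>2)"
    and "eff_var M n (\<lambda>\<omega>. restrict (\<lambda>i. \<alpha> * N \<omega> i + \<beta> * U \<omega> i) {..<n})
         = \<alpha>\<^sup>2 * eff_var M n N + \<beta>\<^sup>2 * second_moment n (lattice n B)"
proof -
  interpret prob_space M by (rule M)
  define Z where "Z = (\<lambda>\<omega>. restrict (\<lambda>i. \<alpha> * N \<omega> i + \<beta> * U \<omega> i) {..<n})"
  note UF = U_facts[OF M Um dist lb]
  have Nc[measurable]: "(\<lambda>\<omega>. N \<omega> i) \<in> borel_measurable M" if "i < n" for i
    using measurable_compose[OF Nm meas_comp[OF that]] .
  have Uc[measurable]: "(\<lambda>\<omega>. U \<omega> i) \<in> borel_measurable M" if "i < n" for i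
    using measurable_compose[OF Um meas_comp[OF that]] .
  show Zm: "(\<lambda>\<omega>. restrict (\<lambda>i. \<alpha> * N \<omega> i + \<beta> * U \<omega> i) {..<n}) \<in> M \<rightarrow>\<^sub>M Rn n"
    unfolding Rn_def by (rule measurable_restrict) (use Nc Uc in auto)
  have sqN: "integrable M (\<lambda>\<omega>. \<Sum>i<n. (N \<omega> i)\<^sup>2)" using Nint by (simp add: vnorm_sq)
  have sqU: "integrable M (\<lambda>\<omega>. \<Sum>i<n. (U \<omega> i)\<^sup>2)" by (rule UF(3))
  have NiSq: "integrable M (\<lambda>\<omega>. (N \<omega> i)\<^sup>2)" if i: "i < n" for i
  proof (rule Bochner_Integration.integrable_bound[OF sqN])
    show "(\<lambda>\<omega>. (N \<omega> i)\<^sup>2) \<in> borel_measurable M" using Nc[OF i] by measurable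
    show "AE \<omega> in M. norm ((N \<omega> i)\<^sup>2) \<le> norm (\<Sum>i<n. (N \<omega> i)\<^sup>2)"
      using i by (intro AE_I2) (simp add: sum_nonneg, intro member_le_sum, auto)
  qed
  have Ni: "integrable M (\<lambda>\<omega>. N \<omega> i)" if i: "i < n" for i
    by (rule square_integrable_imp_integrable[OF Nc[OF i] NiSq[OF i]])
  have Ui: "integrable M (\<lambda>\<omega>. U \<omega> i)" if i: "i < n" for i using UF(4)[OF i] .
  have indi: "indep_var borel (\<lambda>\<omega>. N \<omega> i) borel (\<lambda>\<omega>. U \<omega> i)" if i: "i < n" for i
    using indep_var_compose[OF ind meas_comp[OF i] meas_comp[OF i]] by (simp add: comp_def)
  have NUi: "integrable M (\<lambda>\<omega>. N \<omega> i * U \<omega> i)" if i: "i < n" for i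
    by (rule indep_var_integrable[OF indi[OF i] Ni[OF i] Ui[OF i]])
  have NU0: "(\<integral>\<omega>. N \<omega> i * U \<omega> i \<partial>M) = 0" if i: "i < n" for i
    using indep_var_lebesgue_integral[OF indi[OF i] Ni[OF i] Ui[OF i]] UF(5)[OF i] by simp
  have pw: "(vnorm n (Z \<omega>))\<^sup>2 = \<alpha>\<^sup>2 * (\<Sum>i<n. (N \<omega> i)\<^sup>2) + \<beta>\<^sup>2 * (\<Sum>i<n. (U \<omega> i)\<^sup>2)
      + 2 * (\<alpha> * \<beta>) * (\<Sum>i<n. N \<omega> i * U \<omega> i)" for \<omega>
  proof -
    have "(vnorm n (Z \<omega>))\<^sup>2 = (\<Sum>i<n. \<alpha>\<^sup>2 * (N \<omega> i)\<^sup>2 + \<beta>\<^sup>2 * (U \<omega> i)\<^sup>2 + 2 * (\<alpha> * \<beta>) * (N \<omega> i * U \<omega> i))"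
      unfolding vnorm_sq by (rule sum.cong) (auto simp: Z_def power2_eq_square algebra_simps)
    also have "\<dots> = \<alpha>\<^sup>2 * (\<Sum>i<n. (N \<omega> i)\<^sup>2) + \<beta>\<^sup>2 * (\<Sum>i<n. (U \<omega> i)\<^sup>2)
      + 2 * (\<alpha> * \<beta>) * (\<Sum>i<n. N \<omega> i * U \<omega> i)"
      by (simp add: sum.distrib sum_distrib_left)
    finally show ?thesis .
  qed
  have cross_int: "integrable M (\<lambda>\<omega>. \<Sum>i<n. N \<omega> i * U \<omega> i)"
    by (intro Bochner_Integration.integrable_sum) (use NUi in auto)
  have cross0: "(\<integral>\<omega>. (\<Sum>i<n. N \<omega> i * U \<omega> i) \<partial>M) = 0"
    by (subst Bochner_Integration.integral_sum) (use NUi NU0 in auto)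
  have Zint: "integrable M (\<lambda>\<omega>. (vnorm n (Z \<omega>))\<^sup>2)"
    unfolding pw
    by (intro Bochner_Integration.integrable_add integrable_mult_right sqN sqU cross_int)
  then show "integrable M (\<lambda>\<omega>. (vnorm n (restrict (\<lambda>i. \<alpha> * N \<omega> i + \<beta> * U \<omega> i) {..<n}))\<^sup>2)"
    by (simp add: Z_def)
  have EZ: "(\<integral>\<omega>. (vnorm n (Z \<omega>))\<^sup>2 \<partial>M) = \<alpha>\<^sup>2 * (\<integral>\<omega>. (\<Sum>i<n. (N \<omega> i)\<^sup>2) \<partial>M) + \<beta>\<^sup>2 * (real n * second_moment n (lattice n B))"
    unfolding pw
    by (simp add: Bochner_Integration.integral_add integrable_mult_right sqN sqU cross_int cross0 UF(6)[symmetric])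
  show "eff_var M n (\<lambda>\<omega>. restrict (\<lambda>i. \<alpha> * N \<omega> i + \<beta> * U \<omega> i) {..<n})
         = \<alpha>\<^sup>2 * eff_var M n N + \<beta>\<^sup>2 * second_moment n (lattice n B)"
  proof (cases "n = 0")
    case True then show ?thesis by (simp add: eff_var_def second_moment_def)
  next
    case False
    have "eff_var M n Z = (1 / real n) * (\<alpha>\<^sup>2 * (\<integral>\<omega>. (\<Sum>i<n. (N \<omega> i)\<^sup>2) \<partial>M) + \<beta>\<^sup>2 * (real n * second_moment n (lattice n B)))"
      unfolding eff_var_def EZ ..
    also have "\<dots> = \<alpha>\<^sup>2 * eff_var M n N + \<beta>\<^sup>2 * second_moment n (lattice n B)"
      using False by (simp add: eff_var_def vnorm_sq field_simps)
    finally show ?thesis by (simp add: Z_def)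
  qed
qed

lemma pair_ip_meas:
  "(\<lambda>p. \<Sum>i<n. snd p i * (k * fst p i)) \<in> borel_measurable (Rn n \<Otimes>\<^sub>M Rn n)"
proof -
  have "\<And>i. i \<in> {..<n} \<Longrightarrow> (\<lambda>p. snd p i * (k * fst p i)) \<in> borel_measurable (Rn n \<Otimes>\<^sub>M Rn n)"
  proof -
    fix i assume "i \<in> {..<n}"
    then have i: "i < n" by simp
    have [measurable]: "(\<lambda>p. fst p i) \<in> borel_measurable (Rn n \<Otimes>\<^sub>M Rn n)"
      using measurable_compose[OF measurable_fst meas_comp[OF i]] .
    have [measurable]: "(\<lambda>p. snd p i) \<in> borel_measurable (Rn n \<Otimes>\<^sub>M Rn n)"
      using measurable_compose[OF measurable_snd meas_comp[OF i]] .
    show "(\<lambda>p. snd p i * (k * fst p i)) \<in> borel_measurable (Rn n \<Otimes>\<^sub>M Rn n)" by measurable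
  qed
  from borel_measurable_sum[where f="\<lambda>i p. snd p i * (k * fst p i)" and S="{..<n}", OF this]
  show ?thesis by simp
qed

lemma bad_bound:
  fixes M :: "'a measure" and N U :: "'a \<Rightarrow> nat \<Rightarrow> real" and \<alpha> \<beta> \<delta> \<delta>1 \<eta> \<gamma> :: real
  assumes M: "prob_space M" and Nm: "N \<in> M \<rightarrow>\<^sub>M Rn n"
    and Nint: "integrable M (\<lambda>\<omega>. (vnorm n (N \<omega>))\<^sup>2)"
    and Um: "U \<in> M \<rightarrow>\<^sub>M Rn n"
    and dist: "distr M (Rn n) U = uniform_measure (Rn n) (voronoi n (lattice n B))"
    and lb: "lattice_basis n B"
    and ind: "prob_space.indep_var M (Rn n) N (Rn n) U"
    and n: "n > 0" and nsm: "NSM n (lattice n B) > 0"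
    and \<eta>: "0 < \<eta>" "\<eta> < 1" and \<delta>1: "\<delta>1 > 0" and \<gamma>: "0 \<le> \<gamma>" "\<gamma> < 1"
    and \<delta>: "(1 + \<eta>) * (1 + \<delta>1) \<le> 1 + \<delta>"
  shows "measure M {\<omega>\<in>space M. vnorm n (restrict (\<lambda>i. \<alpha> * N \<omega> i + \<beta> * U \<omega> i) {..<n})
            > sqrt ((1 + \<delta>) * real n * eff_var M n (\<lambda>\<omega>. restrict (\<lambda>i. \<alpha> * N \<omega> i + \<beta> * U \<omega> i) {..<n}))}
     \<le> measure M {\<omega>\<in>space M. vnorm n (N \<omega>) > sqrt ((1 + \<delta>1) * real n * eff_var M n N)}
       + (\<gamma> + ((1 - \<gamma>) * (2 * pi * exp 1 * NSM n (lattice n B))) powr (real n / 2)) / \<delta>1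
       + ((1 + \<delta>1) * (1 - \<eta>\<^sup>2) * (2 * pi * exp 1 * NSM n (lattice n B))) powr (real n / 2)"
proof -
  interpret prob_space M by (rule M)
  define Z where "Z = (\<lambda>\<omega>. restrict (\<lambda>i. \<alpha> * N \<omega> i + \<beta> * U \<omega> i) {..<n})"
  define sU where "sU = second_moment n (lattice n B)"
  define V where "V = cell_volume n (lattice n B)"
  define sN where "sN = eff_var M n N"
  define Q where "Q = NSM n (lattice n B)"
  define \<kappa> where "\<kappa> = sgn (\<alpha> * \<beta>)"
  note UF = U_facts[OF M Um dist lb]
  note ZF = Z_facts[OF M Nm Nint Um dist lb ind, of \<alpha> \<beta>]
  have V: "V > 0" using UF(2) by (simp add: V_def)
  have Vp: "V powr (2 / real n) > 0" using V by simp
  have sUQ: "sU = Q * V powr (2 / real n)"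
    using Vp by (simp add: Q_def NSM_def sU_def V_def)
  have sU: "sU > 0" using sUQ nsm Vp by (simp add: Q_def)
  have Q: "Q > 0" using nsm by (simp add: Q_def)
  have sN: "sN \<ge> 0" unfolding sN_def eff_var_def by (intro mult_nonneg_nonneg integral_nonneg) auto
  have nsU: "real n * sU > 0" using n sU by simp
  have Usp: "U \<omega> \<in> space (Rn n)" if "\<omega> \<in> space M" for \<omega> using measurable_space[OF Um that] .
  have Nsp: "N \<omega> \<in> space (Rn n)" if "\<omega> \<in> space M" for \<omega> using measurable_space[OF Nm that] .
  have sqUm[measurable]: "(\<lambda>\<omega>. \<Sum>i<n. (U \<omega> i)\<^sup>2) \<in> borel_measurable M"
    using measurable_compose[OF Um sq_meas] .
  have vNm[measurable]: "(\<lambda>\<omega>. vnorm n (N \<omega>)) \<in> borel_measurable M"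
    using measurable_compose[OF Nm vnorm_meas] .
  define p where "p = ((1 - \<gamma>) * (2 * pi * exp 1 * Q)) powr (real n / 2)"
  define E2 where "E2 = {\<omega>\<in>space M. (\<Sum>i<n. (U \<omega> i)\<^sup>2) > (1 + \<delta>1) * (real n * sU)}"
  have E2s: "E2 \<in> sets M" unfolding E2_def by measurable
  have pE2: "measure M E2 \<le> (\<gamma> + p) / \<delta>1"
    unfolding E2_def
  proof (rule tail_from_mean[OF M UF(3) _ _ nsU \<gamma> \<delta>1])
    show "\<And>\<omega>. \<omega> \<in> space M \<Longrightarrow> 0 \<le> (\<Sum>i<n. (U \<omega> i)\<^sup>2)" by (simp add: sum_nonneg)
    show "(\<integral>\<omega>. (\<Sum>i<n. (U \<omega> i)\<^sup>2) \<partial>M) = real n * sU" using UF(6) by (simp add: sU_def)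
    define A where "A = {x\<in>space (Rn n). (\<Sum>i<n. (x i)\<^sup>2) \<le> (1 - \<gamma>) * real n * sU}"
    have As: "A \<in> sets (Rn n)" unfolding A_def by measurable
    have pos: "(1 - \<gamma>) * real n * sU > 0" using \<gamma> n sU by simp
    have eA: "emeasure (Rn n) A \<le> ennreal ((2 * pi * exp 1 * ((1 - \<gamma>) * real n * sU) / real n) powr (real n / 2))"
      unfolding A_def by (rule ball_bound[OF pos n])
    have "{\<omega>\<in>space M. (\<Sum>i<n. (U \<omega> i)\<^sup>2) \<le> (1 - \<gamma>) * (real n * sU)} = {\<omega>\<in>space M. U \<omega> \<in> A}"
      unfolding A_def using Usp by (auto simp: mult.assoc)
    also have "measure M \<dots> \<le> (2 * pi * exp 1 * ((1 - \<gamma>) * real n * sU) / real n) powr (real n / 2) / V"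
      unfolding V_def by (rule UF(7)[OF As eA]) simp
    also have "\<dots> = (2 * pi * exp 1 * (1 - \<gamma>) * Q) powr (real n / 2)"
      by (rule nsm_ratio[OF V n _ _ sUQ]) (use \<gamma> Q in auto)
    also have "\<dots> = p" unfolding p_def by (simp add: mult_ac)
    finally show "measure M {\<omega>\<in>space M. (\<Sum>i<n. (U \<omega> i)\<^sup>2) \<le> (1 - \<gamma>) * (real n * sU)} \<le> p" .
  qed
  define R2 where "R2 = (1 + \<delta>1) * (real n * sU)"
  have R2: "R2 > 0" using \<delta>1 nsU by (simp add: R2_def)
  define r where "r = ((1 + \<delta>1) * (1 - \<eta>\<^sup>2) * (2 * pi * exp 1 * Q)) powr (real n / 2)"
  define S where "S = {q\<in>space (Rn n \<Otimes>\<^sub>M Rn n). (\<Sum>i<n. (snd q i)\<^sup>2) \<le> R2 \<and> 0 < (\<Sum>i<n. (fst q i)\<^sup>2)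
      \<and> \<eta> * sqrt (\<Sum>i<n. (fst q i)\<^sup>2) * sqrt R2 \<le> (\<Sum>i<n. snd q i * (\<kappa> * fst q i))}"
  have Ss: "S \<in> sets (Rn n \<Otimes>\<^sub>M Rn n)"
  proof -
    have [measurable]: "(\<lambda>q. \<Sum>i<n. (snd q i)\<^sup>2) \<in> borel_measurable (Rn n \<Otimes>\<^sub>M Rn n)"
      using measurable_compose[OF measurable_snd sq_meas] .
    have [measurable]: "(\<lambda>q. \<Sum>i<n. (fst q i)\<^sup>2) \<in> borel_measurable (Rn n \<Otimes>\<^sub>M Rn n)"
      using measurable_compose[OF measurable_fst sq_meas] .
    have [measurable]: "(\<lambda>q. \<Sum>i<n. snd q i * (\<kappa> * fst q i)) \<in> borel_measurable (Rn n \<Otimes>\<^sub>M Rn n)"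
      by (rule pair_ip_meas)
    show ?thesis unfolding S_def by measurable
  qed
  define E3 where "E3 = {\<omega>\<in>space M. (N \<omega>, U \<omega>) \<in> S}"
  have XY: "(\<lambda>\<omega>. (N \<omega>, U \<omega>)) \<in> M \<rightarrow>\<^sub>M Rn n \<Otimes>\<^sub>M Rn n" using Nm Um by measurable
  have E3s: "E3 \<in> sets M"
  proof -
    have "E3 = (\<lambda>\<omega>. (N \<omega>, U \<omega>)) -` S \<inter> space M" unfolding E3_def by blast
    then show ?thesis using measurable_sets[OF XY Ss] by simp
  qed
  have pE3: "measure M E3 \<le> r"
    unfolding E3_def
  proof (rule pair_bound[OF M Nm Um ind Ss])
    show "r \<ge> 0" unfolding r_def by simp
    fix v assume v: "v \<in> space (Rn n)"
    let ?P = "uniform_measure (Rn n) (voronoi n (lattice n B))"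
    interpret P: prob_space ?P by (rule UF(1))
    show "emeasure (distr M (Rn n) U) (Pair v -` S) \<le> ennreal r"
    proof (cases "0 < (\<Sum>i<n. (v i)\<^sup>2) \<and> \<kappa> \<noteq> 0")
      case False
      have "Pair v -` S = {}"
      proof -
        have "\<eta> * sqrt (\<Sum>i<n. (v i)\<^sup>2) * sqrt R2 > 0" if "0 < (\<Sum>i<n. (v i)\<^sup>2)"
          using that \<eta> R2 by simp
        then show ?thesis using False unfolding S_def by auto
      qed
      then show ?thesis by simp
    next
      case True
      define W where "W = (\<Sum>i<n. (v i)\<^sup>2)"
      define w where "w = (\<lambda>i. \<kappa> * v i)"
      define b where "b = \<eta> * sqrt W * sqrt R2"
      have W: "W > 0" using True by (simp add: W_def)
      have k2: "\<kappa>\<^sup>2 = 1" using True unfolding \<kappa>_def by (auto simp: sgn_if)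
      have Ww: "(\<Sum>i<n. (w i)\<^sup>2) = W" unfolding w_def W_def
        by (simp add: power_mult_distrib k2)
      have b: "b \<ge> 0" using \<eta> W R2 by (simp add: b_def)
      have bW: "b\<^sup>2 / W = \<eta>\<^sup>2 * R2" using W R2 by (simp add: b_def power_mult_distrib)
      have Apos: "R2 - b\<^sup>2 / W > 0" unfolding bW using R2 \<eta>
        by (simp add: power_strict_mono[of \<eta> 1 2, simplified] mult_less_cancel_right1 less_1_mult)
      have slice: "Pair v -` S = {u\<in>space (Rn n). (\<Sum>i<n. (u i)\<^sup>2) \<le> R2 \<and> b \<le> (\<Sum>i<n. u i * w i)}"
        using v True unfolding S_def b_def W_def w_def by (auto simp: space_pair_measure)
      have sls: "Pair v -` S \<in> sets (Rn n)" unfolding slice by measurable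
      have eA: "emeasure (Rn n) (Pair v -` S) \<le> ennreal ((2 * pi * exp 1 * (R2 - b\<^sup>2 / W) / real n) powr (real n / 2))"
        unfolding slice by (rule cap_bound[OF n Ww W b Apos])
      have eq: "R2 - b\<^sup>2 / W = ((1 + \<delta>1) * (1 - \<eta>\<^sup>2)) * real n * sU"
        unfolding bW R2_def by (simp add: algebra_simps)
      have "measure ?P (Pair v -` S) \<le> (2 * pi * exp 1 * (R2 - b\<^sup>2 / W) / real n) powr (real n / 2) / V"
        unfolding V_def cell_volume_def by (rule unif_le[OF vor_sets UF(1) sls eA]) simp
      also have "\<dots> = (2 * pi * exp 1 * ((1 + \<delta>1) * (1 - \<eta>\<^sup>2)) * Q) powr (real n / 2)"
        unfolding eq by (rule nsm_ratio[OF V n _ _ sUQ]) (use \<eta> \<delta>1 Q in \<open>auto simp: power_le_one\<close>)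
      also have "\<dots> = r" unfolding r_def by (simp add: mult_ac)
      finally have "measure ?P (Pair v -` S) \<le> r" .
      then show ?thesis unfolding dist using P.emeasure_eq_measure by (simp add: ennreal_leI)
    qed
  qed
  define E1 where "E1 = {\<omega>\<in>space M. vnorm n (N \<omega>) > sqrt ((1 + \<delta>1) * real n * sN)}"
  have E1s: "E1 \<in> sets M" unfolding E1_def by measurable
  define Bad where "Bad = {\<omega>\<in>space M. vnorm n (Z \<omega>) > sqrt ((1 + \<delta>) * real n * eff_var M n Z)}"
  have sub: "Bad \<subseteq> E1 \<union> E2 \<union> E3"
  proof
    fix \<omega> assume w: "\<omega> \<in> Bad"
    then have ws: "\<omega> \<in> space M" unfolding Bad_def by auto
    show "\<omega> \<in> E1 \<union> E2 \<union> E3"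
    proof (rule ccontr)
      assume "\<omega> \<notin> E1 \<union> E2 \<union> E3"
      then have n1: "\<omega> \<notin> E1" and n2: "\<omega> \<notin> E2" and n3: "\<omega> \<notin> E3" by auto
      define a where "a = (\<Sum>i<n. (N \<omega> i)\<^sup>2)"
      define bb where "bb = (\<Sum>i<n. (U \<omega> i)\<^sup>2)"
      define c where "c = (\<Sum>i<n. N \<omega> i * U \<omega> i)"
      define X where "X = (1 + \<delta>1) * real n * sN"
      have a0: "a \<ge> 0" "bb \<ge> 0" unfolding a_def bb_def by (auto intro: sum_nonneg)
      have X0: "X \<ge> 0" using \<delta>1 sN by (simp add: X_def)
      have aX: "a \<le> X"
      proof -
        have "sqrt a \<le> sqrt X" using n1 ws unfolding E1_def a_def X_def vnorm_def by auto
        then show ?thesis by simp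
      qed
      have bR: "bb \<le> R2" using n2 ws unfolding E2_def bb_def R2_def by auto
      have ac: "a = 0 \<Longrightarrow> c = 0"
      proof -
        assume "a = 0"
        then have "\<forall>i\<in>{..<n}. (N \<omega> i)\<^sup>2 = 0" unfolding a_def by (subst (asm) sum_nonneg_eq_0_iff) auto
        then show "c = 0" unfolding c_def by simp
      qed
      have kc: "(\<Sum>i<n. U \<omega> i * (\<kappa> * N \<omega> i)) = c * \<kappa>"
        unfolding c_def by (simp add: sum_distrib_left sum_distrib_right mult_ac)
      have nE3: "\<not> (0 < a \<and> \<eta> * sqrt a * sqrt R2 \<le> c * sgn (\<alpha> * \<beta>))"
        using n3 ws bR Nsp[OF ws] Usp[OF ws] kc unfolding E3_def S_def a_def bb_def \<kappa>_def
        by (auto simp: space_pair_measure)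
      have cr: "\<alpha> * \<beta> * c \<le> \<bar>\<alpha> * \<beta>\<bar> * (\<eta> * sqrt a * sqrt R2)"
        by (rule cross_bound[OF a0(1) ac nE3]) (use \<eta> R2 in auto)
      have pw: "(vnorm n (Z \<omega>))\<^sup>2 = \<alpha>\<^sup>2 * a + \<beta>\<^sup>2 * bb + 2 * (\<alpha> * \<beta> * c)"
      proof -
        have "(vnorm n (Z \<omega>))\<^sup>2 = (\<Sum>i<n. \<alpha>\<^sup>2 * (N \<omega> i)\<^sup>2 + \<beta>\<^sup>2 * (U \<omega> i)\<^sup>2 + 2 * (\<alpha> * \<beta>) * (N \<omega> i * U \<omega> i))"
          unfolding vnorm_sq by (rule sum.cong) (auto simp: Z_def power2_eq_square algebra_simps)
        also have "\<dots> = \<alpha>\<^sup>2 * a + \<beta>\<^sup>2 * bb + 2 * (\<alpha> * \<beta>) * c"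
          unfolding a_def bb_def c_def by (simp add: sum.distrib sum_distrib_left)
        finally show ?thesis by simp
      qed
      have "(vnorm n (Z \<omega>))\<^sup>2 \<le> (1 + \<eta>) * (\<alpha>\<^sup>2 * X + \<beta>\<^sup>2 * R2)"
        unfolding pw by (rule main_ineq[OF a0(1) aX a0(2) bR _ cr]) (use \<eta> in simp)
      also have "\<dots> = ((1 + \<eta>) * (1 + \<delta>1)) * real n * (\<alpha>\<^sup>2 * sN + \<beta>\<^sup>2 * sU)"
        unfolding X_def R2_def by (simp add: algebra_simps)
      also have "\<dots> \<le> (1 + \<delta>) * real n * (\<alpha>\<^sup>2 * sN + \<beta>\<^sup>2 * sU)"
        using \<delta> sN sU by (intro mult_right_mono) (auto intro: add_nonneg_nonneg)
      also have "\<alpha>\<^sup>2 * sN + \<beta>\<^sup>2 * sU = eff_var M n Z"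
        using ZF(3) unfolding Z_def sN_def sU_def by simp
      finally have "vnorm n (Z \<omega>) \<le> sqrt ((1 + \<delta>) * real n * eff_var M n Z)"
        using real_le_rsqrt vnorm_def by (metis real_sqrt_ge_zero real_sqrt_le_iff real_sqrt_pow2 vnorm_def zero_le_power2)
      then show False using w unfolding Bad_def by auto
    qed
  qed
  have "measure M Bad \<le> measure M (E1 \<union> E2 \<union> E3)"
    using sub E1s E2s E3s by (intro finite_measure_mono) auto
  also have "\<dots> \<le> measure M E1 + measure M E2 + measure M E3"
    using measure_Un_le[of "E1 \<union> E2" M E3] measure_Un_le[of E1 M E2] E1s E2s E3s by auto
  also have "\<dots> \<le> measure M E1 + (\<gamma> + p) / \<delta>1 + r" using pE2 pE3 by simp
  finally show ?thesis unfolding Bad_def E1_def Z_def p_def r_def Q_def sN_def .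
qed

lemma ev_powr_small:
  fixes q :: "nat \<Rightarrow> real"
  assumes q: "q \<longlonglongrightarrow> 1" and k: "0 \<le> k" "k < 1" and e: "e > 0"
  shows "eventually (\<lambda>n. q n > 0 \<longrightarrow> (k * q n) powr (real n / 2) < e) sequentially"
proof -
  have "(\<lambda>n. max 0 (k * q n)) \<longlonglongrightarrow> max 0 (k * 1)"
    by (intro tendsto_max tendsto_const tendsto_mult q)
  then have "(\<lambda>n. max 0 (k * q n) powr (real n / 2)) \<longlonglongrightarrow> 0"
    by (rule powr_tendsto_zero) (use k in auto)
  then have "eventually (\<lambda>n. max 0 (k * q n) powr (real n / 2) < e) sequentially"
    using e by (rule order_tendstoD)
  then show ?thesis
  proof eventually_elim
    case (elim n)
    show ?case
    proof
      assume "q n > 0"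
      then have "max 0 (k * q n) = k * q n" using k by simp
      then show "(k * q n) powr (real n / 2) < e" using elim by simp
    qed
  qed
qed

theorem lemma5:
  fixes M :: "nat \<Rightarrow> 'a measure"
    and N U :: "nat \<Rightarrow> 'a \<Rightarrow> nat \<Rightarrow> real"
    and B :: "nat \<Rightarrow> nat \<Rightarrow> nat \<Rightarrow> real"
    and \<alpha> \<beta> :: real
  assumes "\<And>n. prob_space (M n)"
    and "semi_norm_ergodic M N"
    and "good_for_MSE B"
    and "\<And>n. U n \<in> M n \<rightarrow>\<^sub>M Rn n"
    and "\<And>n. distr (M n) (Rn n) (U n) = uniform_measure (Rn n) (voronoi n (lattice n (B n)))"
    and "\<And>n. prob_space.indep_var (M n) (Rn n) (N n) (Rn n) (U n)"
  shows "semi_norm_ergodic M (\<lambda>n \<omega>. restrict (\<lambda>i. \<alpha> * N n \<omega> i + \<beta> * U n \<omega> i) {..<n})"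
proof -
  have lb: "\<And>n. lattice_basis n (B n)"
    and lim: "(\<lambda>n. NSM n (lattice n (B n))) \<longlonglongrightarrow> 1 / (2 * pi * exp 1)"
    using assms(3) unfolding good_for_MSE_def by auto
  have Nm: "\<And>n. N n \<in> M n \<rightarrow>\<^sub>M Rn n"
    and Nint: "\<And>n. integrable (M n) (\<lambda>\<omega>. (vnorm n (N n \<omega>))\<^sup>2)"
    and Nerg: "\<And>\<epsilon> \<delta>. \<epsilon> > 0 \<Longrightarrow> \<delta> > 0 \<Longrightarrow> eventually (\<lambda>n.
        measure (M n) {\<omega> \<in> space (M n).
          vnorm n (N n \<omega>) > sqrt ((1 + \<delta>) * real n * eff_var (M n) n (N n))} \<le> \<epsilon>) sequentially"
    using assms(2) unfolding semi_norm_ergodic_def by auto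
  note ZF = Z_facts[OF assms(1) Nm Nint assms(4) assms(5) lb assms(6), where \<alpha>=\<alpha> and \<beta>=\<beta>]
  define q where "q n = 2 * pi * exp 1 * NSM n (lattice n (B n))" for n
  have q: "q \<longlonglongrightarrow> 1"
  proof -
    have "q \<longlonglongrightarrow> 2 * pi * exp 1 * (1 / (2 * pi * exp 1))"
      unfolding q_def by (intro tendsto_mult_left lim)
    then show ?thesis by simp
  qed
  show ?thesis unfolding semi_norm_ergodic_def
  proof (intro conjI allI impI)
    fix n show "(\<lambda>\<omega>. restrict (\<lambda>i. \<alpha> * N n \<omega> i + \<beta> * U n \<omega> i) {..<n}) \<in> M n \<rightarrow>\<^sub>M Rn n"
      by (rule ZF(1))
  next
    fix n show "integrable (M n) (\<lambda>\<omega>. (vnorm n (restrict (\<lambda>i. \<alpha> * N n \<omega> i + \<beta> * U n \<omega> i) {..<n}))\<^sup>2)"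
      by (rule ZF(2))
  next
    fix \<epsilon> \<delta> :: real assume \<epsilon>: "\<epsilon> > 0" and \<delta>: "\<delta> > 0"
    define \<eta> where "\<eta> = min \<delta> 1 / 3"
    define \<delta>1 where "\<delta>1 = \<eta>\<^sup>2 / 2"
    define \<gamma> where "\<gamma> = min (1/2) (\<epsilon> * \<delta>1 / 6)"
    have \<eta>: "0 < \<eta>" "\<eta> < 1" "\<eta> \<le> 1/3" using \<delta> by (auto simp: \<eta>_def)
    have \<delta>1: "\<delta>1 > 0" "\<delta>1 \<le> \<eta>" using \<eta> by (auto simp: \<delta>1_def power2_eq_square)
    have \<gamma>: "0 < \<gamma>" "\<gamma> < 1" "\<gamma> \<le> \<epsilon> * \<delta>1 / 6" using \<epsilon> \<delta>1 by (auto simp: \<gamma>_def)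
    have dd: "(1 + \<eta>) * (1 + \<delta>1) \<le> 1 + \<delta>"
    proof -
      have "(1 + \<eta>) * (1 + \<delta>1) \<le> (1 + \<eta>) * (1 + \<eta>)" using \<eta> \<delta>1 by (intro mult_left_mono) auto
      also have "\<dots> = 1 + 2 * \<eta> + \<eta> * \<eta>" by (simp add: algebra_simps)
      also have "\<dots> \<le> 1 + 3 * \<eta>" using \<eta> by (simp add: mult_right_le_one_le)
      also have "\<dots> \<le> 1 + \<delta>" using \<delta> by (simp add: \<eta>_def)
      finally show ?thesis .
    qed
    have k3: "0 \<le> (1 + \<delta>1) * (1 - \<eta>\<^sup>2)" using \<eta> \<delta>1 by (simp add: power_le_one)
    have k3': "(1 + \<delta>1) * (1 - \<eta>\<^sup>2) < 1"
    proof -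
      have e: "(1 + e / 2) * (1 - e) = 1 - e / 2 - e * e / 2" for e :: real
        by (simp add: field_simps)
      have "(1 + \<delta>1) * (1 - \<eta>\<^sup>2) = 1 - \<eta>\<^sup>2 / 2 - \<eta>\<^sup>2 * \<eta>\<^sup>2 / 2"
        unfolding \<delta>1_def by (rule e)
      moreover have "\<eta>\<^sup>2 > 0" using \<eta> by simp
      moreover have "\<eta>\<^sup>2 * \<eta>\<^sup>2 \<ge> 0" by simp
      ultimately show ?thesis by linarith
    qed
    have ev_n: "eventually (\<lambda>n. n > 0) sequentially" by (rule eventually_gt_at_top)
    have ev_pos: "eventually (\<lambda>n. NSM n (lattice n (B n)) > 0) sequentially"
      using lim by (rule order_tendstoD) (simp add: pi_gt_zero)
    have ev1: "eventually (\<lambda>n. measure (M n) {\<omega> \<in> space (M n).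
          vnorm n (N n \<omega>) > sqrt ((1 + \<delta>1) * real n * eff_var (M n) n (N n))} \<le> \<epsilon> / 3) sequentially"
      using Nerg[of "\<epsilon> / 3" \<delta>1] \<epsilon> \<delta>1 by simp
    have ev2: "eventually (\<lambda>n. q n > 0 \<longrightarrow> ((1 - \<gamma>) * q n) powr (real n / 2) < \<epsilon> * \<delta>1 / 6) sequentially"
      by (rule ev_powr_small[OF q]) (use \<gamma> \<epsilon> \<delta>1 in auto)
    have ev3: "eventually (\<lambda>n. q n > 0 \<longrightarrow> ((1 + \<delta>1) * (1 - \<eta>\<^sup>2) * q n) powr (real n / 2) < \<epsilon> / 3) sequentially"
      by (rule ev_powr_small[OF q k3 k3']) (use \<epsilon> in auto)
    show "eventually (\<lambda>n. measure (M n) {\<omega> \<in> space (M n).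
          vnorm n (restrict (\<lambda>i. \<alpha> * N n \<omega> i + \<beta> * U n \<omega> i) {..<n}) >
          sqrt ((1 + \<delta>) * real n * eff_var (M n) n (\<lambda>\<omega>. restrict (\<lambda>i. \<alpha> * N n \<omega> i + \<beta> * U n \<omega> i) {..<n}))} \<le> \<epsilon>) sequentially"
      using ev_n ev_pos ev1 ev2 ev3
    proof eventually_elim
      case (elim n)
      have qn: "q n > 0" using elim(2) by (simp add: q_def pi_gt_zero)
      have bb: "measure (M n) {\<omega> \<in> space (M n).
          vnorm n (restrict (\<lambda>i. \<alpha> * N n \<omega> i + \<beta> * U n \<omega> i) {..<n}) >
          sqrt ((1 + \<delta>) * real n * eff_var (M n) n (\<lambda>\<omega>. restrict (\<lambda>i. \<alpha> * N n \<omega> i + \<beta> * U n \<omega> i) {..<n}))}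
        \<le> measure (M n) {\<omega>\<in>space (M n). vnorm n (N n \<omega>) > sqrt ((1 + \<delta>1) * real n * eff_var (M n) n (N n))}
          + (\<gamma> + ((1 - \<gamma>) * q n) powr (real n / 2)) / \<delta>1
          + ((1 + \<delta>1) * (1 - \<eta>\<^sup>2) * q n) powr (real n / 2)"
        unfolding q_def
        by (rule bad_bound[OF assms(1) Nm Nint assms(4) assms(5) lb assms(6) elim(1) elim(2) \<eta>(1,2) \<delta>1(1) _ _ dd])
           (use \<gamma> in auto)
      have t2: "(\<gamma> + ((1 - \<gamma>) * q n) powr (real n / 2)) / \<delta>1 \<le> \<epsilon> / 3"
      proof -
        have "\<gamma> + ((1 - \<gamma>) * q n) powr (real n / 2) \<le> \<epsilon> * \<delta>1 / 3"
          using elim(4) qn \<gamma> by simp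
        then have "(\<gamma> + ((1 - \<gamma>) * q n) powr (real n / 2)) / \<delta>1 \<le> (\<epsilon> * \<delta>1 / 3) / \<delta>1"
          using \<delta>1 by (intro divide_right_mono) auto
        also have "\<dots> = \<epsilon> / 3" using \<delta>1 by simp
        finally show ?thesis .
      qed
      have t3: "((1 + \<delta>1) * (1 - \<eta>\<^sup>2) * q n) powr (real n / 2) \<le> \<epsilon> / 3"
        using elim(5) qn by simp
      show ?case using bb elim(3) t2 t3 by linarith
    qed
  qed
qed


end
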